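(* Consider the system \[ \begin{aligned} \dot S_h(t)&=\beta_h-C_{vh}\frac{I_v(t)}{N_v(t)}S_h(t)-\mu_hS_h(t),\\ \dot I_h(t)&=C_{vh}\frac{I_v(t-\tau)}{N_v(t-\tau)}S_h(t-\tau)-\mu_hI_h(t),\\ \dot S_v(t)&=\beta_v-C_{hv}I_h(t)S_v(t)-\mu_vS_v(t),\\ \dot I_v(t)&=C_{hv}I_h(t)S_v(t)-\mu_vI_v(t), \end{aligned} \] with $N_v=S_v+I_v$ and positive parameters $\beta_h,\beta_v,\mu_h,\mu_v,C_{vh},C_{hv}$. Let $R_0=\sqrt{C_{vh}C_{hv}\beta_h/(\mu_h^2\mu_v)}$. If $R_0>1$, then the unique endemic equilibrium $E^*$ (the unique equilibrium with all components positive) is locally asymptotically stable for any $\tau\ge0$.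
   Context: The phase space is $C_+=\{\varphi\in C([-\tau,0],\mathbb{R}_+^4):\varphi_3(\theta)+\varphi_4(\theta)>0\ \forall\theta\in[-\tau,0]\}$ with the sup-norm. *)

theory Defs
  imports "HOL-Analysis.Analysis"
begin

definition R0 :: "real \<Rightarrow> real \<Rightarrow> real \<Rightarrow> real \<Rightarrow> real \<Rightarrow> real \<Rightarrow> real" where
  "R0 bh bv mh mv Cvh Chv = sqrt (Cvh * Chv * bh / (mh\<^sup>2 * mv))"

definition is_equilibrium ::
  "real \<Rightarrow> real \<Rightarrow> real \<Rightarrow> real \<Rightarrow> real \<Rightarrow> real \<Rightarrow> real \<times> real \<times> real \<times> real \<Rightarrow> bool" where
  "is_equilibrium bh bv mh mv Cvh Chv E \<longleftrightarrow>
     (case E of (sh, ih, sv, iv) \<Rightarrow>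
        sv + iv > 0 \<and>
        bh - Cvh * (iv / (sv + iv)) * sh - mh * sh = 0 \<and>
        Cvh * (iv / (sv + iv)) * sh - mh * ih = 0 \<and>
        bv - Chv * ih * sv - mv * sv = 0 \<and>
        Chv * ih * sv - mv * iv = 0)"

definition endemic_equilibrium ::
  "real \<Rightarrow> real \<Rightarrow> real \<Rightarrow> real \<Rightarrow> real \<Rightarrow> real \<Rightarrow> real \<times> real \<times> real \<times> real \<Rightarrow> bool" where
  "endemic_equilibrium bh bv mh mv Cvh Chv E \<longleftrightarrow>
     is_equilibrium bh bv mh mv Cvh Chv E \<and>
     (case E of (sh, ih, sv, iv) \<Rightarrow> sh > 0 \<and> ih > 0 \<and> sv > 0 \<and> iv > 0)"

definition in_Cplus :: "real \<Rightarrow> (real \<Rightarrow> real) \<Rightarrow> (real \<Rightarrow> real) \<Rightarrow> (real \<Rightarrow> real) \<Rightarrow> (real \<Rightarrow> real) \<Rightarrow> bool" where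
  "in_Cplus tau Sh Ih Sv Iv \<longleftrightarrow>
     continuous_on {-tau..0} Sh \<and> continuous_on {-tau..0} Ih \<and>
     continuous_on {-tau..0} Sv \<and> continuous_on {-tau..0} Iv \<and>
     (\<forall>\<theta>\<in>{-tau..0}. Sh \<theta> \<ge> 0 \<and> Ih \<theta> \<ge> 0 \<and> Sv \<theta> \<ge> 0 \<and> Iv \<theta> \<ge> 0 \<and> Sv \<theta> + Iv \<theta> > 0)"

definition is_solution ::
  "real \<Rightarrow> real \<Rightarrow> real \<Rightarrow> real \<Rightarrow> real \<Rightarrow> real \<Rightarrow> real \<Rightarrow>
   (real \<Rightarrow> real) \<Rightarrow> (real \<Rightarrow> real) \<Rightarrow> (real \<Rightarrow> real) \<Rightarrow> (real \<Rightarrow> real) \<Rightarrow> bool" where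
  "is_solution bh bv mh mv Cvh Chv tau Sh Ih Sv Iv \<longleftrightarrow>
     continuous_on {-tau..} Sh \<and> continuous_on {-tau..} Ih \<and>
     continuous_on {-tau..} Sv \<and> continuous_on {-tau..} Iv \<and>
     (\<forall>t\<ge>0.
        (Sh has_real_derivative
           (bh - Cvh * (Iv t / (Sv t + Iv t)) * Sh t - mh * Sh t)) (at t within {0..}) \<and>
        (Ih has_real_derivative
           (Cvh * (Iv (t - tau) / (Sv (t - tau) + Iv (t - tau))) * Sh (t - tau) - mh * Ih t))
           (at t within {0..}) \<and>
        (Sv has_real_derivative (bv - Chv * Ih t * Sv t - mv * Sv t)) (at t within {0..}) \<and>
        (Iv has_real_derivative (Chv * Ih t * Sv t - mv * Iv t)) (at t within {0..}))"

definition init_close ::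
  "real \<Rightarrow> real \<times> real \<times> real \<times> real \<Rightarrow> real \<Rightarrow>
   (real \<Rightarrow> real) \<Rightarrow> (real \<Rightarrow> real) \<Rightarrow> (real \<Rightarrow> real) \<Rightarrow> (real \<Rightarrow> real) \<Rightarrow> bool" where
  "init_close tau E d Sh Ih Sv Iv \<longleftrightarrow>
     (case E of (sh, ih, sv, iv) \<Rightarrow>
       (SUP \<theta>\<in>{-tau..0}. max (max \<bar>Sh \<theta> - sh\<bar> \<bar>Ih \<theta> - ih\<bar>) (max \<bar>Sv \<theta> - sv\<bar> \<bar>Iv \<theta> - iv\<bar>)) < d)"

definition locally_asymptotically_stable ::
  "real \<Rightarrow> real \<Rightarrow> real \<Rightarrow> real \<Rightarrow> real \<Rightarrow> real \<Rightarrow> real \<Rightarrow> real \<times> real \<times> real \<times> real \<Rightarrow> bool" where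
  "locally_asymptotically_stable bh bv mh mv Cvh Chv tau E \<longleftrightarrow>
     (case E of (sh, ih, sv, iv) \<Rightarrow>
       \<comment> \<open>stability\<close>
       (\<forall>\<epsilon>>0. \<exists>\<delta>>0. \<forall>Sh Ih Sv Iv.
          in_Cplus tau Sh Ih Sv Iv \<and> init_close tau E \<delta> Sh Ih Sv Iv \<and>
          is_solution bh bv mh mv Cvh Chv tau Sh Ih Sv Iv \<longrightarrow>
          (\<forall>t\<ge>0. \<bar>Sh t - sh\<bar> < \<epsilon> \<and> \<bar>Ih t - ih\<bar> < \<epsilon> \<and> \<bar>Sv t - sv\<bar> < \<epsilon> \<and> \<bar>Iv t - iv\<bar> < \<epsilon>)) \<and>
       \<comment> \<open>local attractivity\<close>
       (\<exists>\<delta>>0. \<forall>Sh Ih Sv Iv.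
          in_Cplus tau Sh Ih Sv Iv \<and> init_close tau E \<delta> Sh Ih Sv Iv \<and>
          is_solution bh bv mh mv Cvh Chv tau Sh Ih Sv Iv \<longrightarrow>
          (Sh \<longlongrightarrow> sh) at_top \<and> (Ih \<longlongrightarrow> ih) at_top \<and>
          (Sv \<longlongrightarrow> sv) at_top \<and> (Iv \<longlongrightarrow> iv) at_top))"

end

theory Submission
  imports Defs "HOL-Real_Asymp.Real_Asymp"
begin

definition GG :: "real \<Rightarrow> real" where "GG x = x - 1 - ln x"

lemma GG_nonneg: "(x::real) > 0 \<Longrightarrow> GG x \<ge> 0"
  using ln_le_minus_one[of x] by (simp add: GG_def)

lemma ln_ge_one_minus_inv: "(x::real) > 0 \<Longrightarrow> ln x \<ge> 1 - 1/x"
  using ln_le_minus_one[of "1/x"] by (simp add: ln_div)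

lemma GG_upper: "(x::real) > 0 \<Longrightarrow> GG x \<le> (x-1)^2/x"
proof -
  assume x: "x > 0"
  have "(x-1)^2/x = x - 2 + 1/x" using x by (simp add: field_simps power2_eq_square)
  then show ?thesis using ln_ge_one_minus_inv[OF x] by (simp add: GG_def)
qed

lemma GG_lower: assumes "0 < (x::real)" "x \<le> 2" shows "GG x \<ge> (x-1)^2/4"
proof -
  define h where "h y = y - 1 - ln y - (y-1)^2/4" for y :: real
  have dh: "(h has_real_derivative (1 - 1/y - (y-1)/2)) (at y)" if "y > 0" for y
    unfolding h_def using that
    by (auto intro!: derivative_eq_intros simp: field_simps power2_eq_square)
  have h1: "h 1 = 0" by (simp add: h_def)
  have "h x \<ge> 0"
  proof (cases "x \<ge> 1")
    case True
    have "h 1 \<le> h x"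
    proof (rule DERIV_nonneg_imp_increasing_open[OF True])
      fix y assume y: "1 < y" "y < x"
      have "1 - 1/y - (y-1)/2 = (y-1)*(2-y)/(2*y)" using y by (simp add: field_simps)
      also have "\<dots> \<ge> 0" using y assms by (intro divide_nonneg_pos mult_nonneg_nonneg) auto
      finally show "\<exists>d. (h has_real_derivative d) (at y) \<and> d \<ge> 0" using dh[of y] y by auto
    next
      show "continuous_on {1..x} h" unfolding h_def
        by (intro continuous_intros) auto
    qed
    then show ?thesis using h1 by simp
  next
    case False
    have "h x \<ge> h 1"
    proof (rule DERIV_nonpos_imp_decreasing_open[of x 1 h])
      show "x \<le> 1" using False by simp
      fix y assume y: "x < y" "y < 1"
      have "1 - 1/y - (y-1)/2 = - ((1-y)*(2-y)/(2*y))" using y assms by (simp add: field_simps)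
      also have "\<dots> \<le> 0" using y assms by (simp add: divide_nonneg_pos mult_nonneg_nonneg)
      finally show "\<exists>d. (h has_real_derivative d) (at y) \<and> d \<le> 0" using dh[of y] y assms by auto
    next
      show "continuous_on {x..1} h" unfolding h_def using assms
        by (intro continuous_intros) auto
    qed
    then show ?thesis using h1 by simp
  qed
  then show ?thesis by (simp add: h_def GG_def)
qed

lemma deriv_at_of_within:
  assumes "t > 0" "(f has_real_derivative D) (at t within {0..})"
  shows "(f has_real_derivative D) (at t)"
proof -
  have "(f has_real_derivative D) (at t within {0<..})"
    by (rule DERIV_subset[OF assms(2)]) auto
  then show ?thesis using at_within_open[of t "{0<..}"] assms(1) by auto
qed

lemma lip_from_deriv:
  fixes f f' :: "real \<Rightarrow> real"
  assumes "a \<le> b" "\<And>x. a < x \<Longrightarrow> x < b \<Longrightarrow> (f has_real_derivative f' x) (at x)"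
    "\<And>x. a < x \<Longrightarrow> x < b \<Longrightarrow> \<bar>f' x\<bar> \<le> B" "continuous_on {a..b} f"
  shows "\<bar>f b - f a\<bar> \<le> B * (b - a)"
proof -
  have "(\<lambda>x. B*x - f x) a \<le> (\<lambda>x. B*x - f x) b"
  proof (rule DERIV_nonneg_imp_increasing_open[OF assms(1)])
    fix x assume x: "a < x" "x < b"
    show "\<exists>y. ((\<lambda>x. B*x - f x) has_real_derivative y) (at x) \<and> y \<ge> 0"
      using assms(2)[OF x] assms(3)[OF x]
      by (intro exI[of _ "B - f' x"]) (auto intro!: derivative_eq_intros)
  qed (use assms(4) in \<open>auto intro!: continuous_intros\<close>)
  moreover have "(\<lambda>x. B*x + f x) a \<le> (\<lambda>x. B*x + f x) b"
  proof (rule DERIV_nonneg_imp_increasing_open[OF assms(1)])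
    fix x assume x: "a < x" "x < b"
    show "\<exists>y. ((\<lambda>x. B*x + f x) has_real_derivative y) (at x) \<and> y \<ge> 0"
      using assms(2)[OF x] assms(3)[OF x]
      by (intro exI[of _ "B + f' x"]) (auto intro!: derivative_eq_intros)
  qed (use assms(4) in \<open>auto intro!: continuous_intros\<close>)
  ultimately show ?thesis by (auto simp: algebra_simps abs_le_iff)
qed

lemma cont_from_deriv:
  assumes "\<And>x. x \<in> S \<Longrightarrow> (f has_real_derivative f' x) (at x)"
  shows "continuous_on S f"
  using assms by (meson DERIV_continuous continuous_at_imp_continuous_on)


lemma decay:
  fixes W W' g g' :: "real \<Rightarrow> real"
  assumes k: "k > 0" and B: "B > 0"
    and dW: "\<And>t. t > 0 \<Longrightarrow> (W has_real_derivative W' t) (at t)"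
    and Wnn: "\<And>t. t > 0 \<Longrightarrow> W t \<ge> 0"
    and Wle: "\<And>t. t > 0 \<Longrightarrow> W' t \<le> - k * (g t)^2"
    and dg: "\<And>t. t > 0 \<Longrightarrow> (g has_real_derivative g' t) (at t)"
    and gB: "\<And>t. t > 0 \<Longrightarrow> \<bar>g' t\<bar> \<le> B"
  shows "(g \<longlongrightarrow> 0) at_top"
proof (rule tendstoI)
  fix e :: real assume e: "e > 0"
  define \<eta> where "\<eta> = e/2"
  define h where "h = \<eta>/B"
  define c0 where "c0 = k*\<eta>^2*h"
  have \<eta>: "\<eta> > 0" and h: "h > 0" and c0: "c0 > 0" using e B k by (auto simp: \<eta>_def h_def c0_def)
  have Wmono: "W t \<le> W s" if "0 < s" "s \<le> t" for s t
  proof (rule DERIV_nonpos_imp_decreasing_open[of s t W])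
    fix x assume x: "s < x" "x < t"
    show "\<exists>y. (W has_real_derivative y) (at x) \<and> y \<le> 0"
    proof -
      have "k*(g x)^2 \<ge> 0" using k by simp
      then show ?thesis using dW[of x] Wle[of x] that x by (intro exI[of _ "W' x"]) auto
    qed
  next
    show "continuous_on {s..t} W" using dW that by (intro cont_from_deriv[of _ W W']) auto
  qed (use that in auto)
  define L where "L = Inf (W ` {1..})"
  have bdd: "bdd_below (W ` {1..})" using Wnn by (auto intro!: bdd_belowI[of _ 0])
  have "L < L + c0" using c0 by simp
  then obtain T where T: "T \<in> {1..}" "W T < L + c0"
    unfolding L_def using cInf_less_iff[OF _ bdd, of "L + c0"] by (auto simp: L_def)
  have "\<bar>g t\<bar> < e" if t: "t \<ge> T" for t
  proof (rule ccontr)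
    assume "\<not> \<bar>g t\<bar> < e"
    hence gt: "\<bar>g t\<bar> \<ge> 2*\<eta>" by (simp add: \<eta>_def)
    have t0: "t > 0" using T t by auto
    have big: "\<bar>g s\<bar> \<ge> \<eta>" if s: "t \<le> s" "s \<le> t + h" for s
    proof -
      have "\<bar>g s - g t\<bar> \<le> B * (s - t)"
        using s t0 dg gB by (intro lip_from_deriv[of t s g g' B]) (auto intro!: cont_from_deriv[of _ g g'])
      also have "\<dots> \<le> B * h" using s B by auto
      also have "\<dots> = \<eta>" using B by (simp add: h_def)
      finally show ?thesis using gt by auto
    qed
    have "(\<lambda>x. W x + k*\<eta>^2*x) (t+h) \<le> (\<lambda>x. W x + k*\<eta>^2*x) t"
    proof (rule DERIV_nonpos_imp_decreasing_open[of t "t+h"])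
      fix x assume x: "t < x" "x < t + h"
      have "\<eta>^2 \<le> (g x)^2" using big[of x] x \<eta>
        by (metis abs_ge_zero less_imp_le power2_abs power_mono)
      hence "k*\<eta>^2 \<le> k*(g x)^2" using k by (intro mult_left_mono) auto
      hence "W' x + k*\<eta>^2 \<le> 0" using Wle[of x] x t0 by linarith
      then show "\<exists>y. ((\<lambda>x. W x + k*\<eta>^2*x) has_real_derivative y) (at x) \<and> y \<le> 0"
        using dW[of x] x t0 by (intro exI[of _ "W' x + k*\<eta>^2"]) (auto intro!: derivative_eq_intros)
    next
      show "continuous_on {t..t+h} (\<lambda>x. W x + k*\<eta>^2*x)"
        using dW t0 by (intro continuous_intros cont_from_deriv[of _ W W']) auto
    qed (use h in auto)
    hence "W (t+h) \<le> W t - c0" by (simp add: c0_def algebra_simps)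
    also have "W t \<le> W T" using Wmono[of T t] T t by auto
    finally have "W (t+h) < L" using T by simp
    moreover have "L \<le> W (t+h)" unfolding L_def using bdd t T h by (intro cInf_lower) auto
    ultimately show False by simp
  qed
  then show "\<forall>\<^sub>F x in at_top. dist (g x) 0 < e"
    by (auto simp: eventually_at_top_linorder intro!: exI[of _ T])
qed

lemma lin_conv:
  fixes y h :: "real \<Rightarrow> real"
  assumes m: "m > 0"
    and dy: "\<And>t. t > 0 \<Longrightarrow> (y has_real_derivative (h t - m * y t)) (at t)"
    and hlim: "(h \<longlongrightarrow> h0) at_top"
  shows "(y \<longlongrightarrow> h0/m) at_top"
proof (rule tendstoI)
  fix e :: real assume e: "e > 0"
  have "\<forall>\<^sub>F t in at_top. dist (h t) h0 < m*e/4" using hlim e m by (intro tendstoD) auto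
  then obtain T0 where T0: "\<And>t. t \<ge> T0 \<Longrightarrow> \<bar>h t - h0\<bar> < m*e/4"
    by (auto simp: eventually_at_top_linorder dist_real_def)
  define T where "T = max T0 1"
  have T: "T > 0" "\<And>t. t \<ge> T \<Longrightarrow> \<bar>h t - h0\<bar> < m*e/4" using T0 by (auto simp: T_def)
  define A where "A = \<bar>y T - h0/m - e/4\<bar> + \<bar>y T - h0/m + e/4\<bar>"
  have "((\<lambda>t. A * exp (- m * (t - T))) \<longlongrightarrow> 0) at_top" using m by real_asymp
  hence ev: "\<forall>\<^sub>F t in at_top. A * exp (- m * (t - T)) < e/4"
    using e by (intro order_tendstoD) auto
  have up: "y t - h0/m - e/4 \<le> A * exp (- m * (t - T))"
    and lo: "y t - h0/m + e/4 \<ge> - A * exp (- m * (t - T))" if t: "t \<ge> T" for t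
  proof -
    have "(\<lambda>s. (y s - h0/m - e/4) * exp (m * s)) t \<le> (\<lambda>s. (y s - h0/m - e/4) * exp (m * s)) T"
    proof (rule DERIV_nonpos_imp_decreasing_open[OF t])
      fix x assume x: "T < x" "x < t"
      have "\<bar>h x - h0\<bar> < m*e/4" using T(2)[of x] x by simp
      hence "- (m*e/4) < h x - h0 \<and> h x - h0 < m*e/4" by arith
      hence "(h x - h0 - m*e/4) * exp (m*x) \<le> 0"
        by (intro mult_nonpos_nonneg) auto
      then show "\<exists>d. ((\<lambda>s. (y s - h0/m - e/4) * exp (m * s)) has_real_derivative d) (at x) \<and> d \<le> 0"
        using dy[of x] x T m
        by (intro exI[of _ "(h x - h0 - m*e/4) * exp (m*x)"])
           (auto intro!: derivative_eq_intros simp: field_simps)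
    next
      show "continuous_on {T..t} (\<lambda>s. (y s - h0/m - e/4) * exp (m * s))"
        using dy T by (intro continuous_intros cont_from_deriv[of _ y "\<lambda>t. h t - m * y t"]) auto
    qed
    hence "y t - h0/m - e/4 \<le> (y T - h0/m - e/4) * (exp (m*T) / exp (m*t))"
      by (simp add: field_simps)
    also have "exp (m*T) / exp (m*t) = exp (- m * (t - T))"
      by (simp add: exp_diff[symmetric] algebra_simps)
    also have "(y T - h0/m - e/4) * exp (- m * (t - T)) \<le> A * exp (- m * (t - T))"
      by (intro mult_right_mono) (auto simp: A_def)
    finally show "y t - h0/m - e/4 \<le> A * exp (- m * (t - T))" .
    have "(\<lambda>s. (y s - h0/m + e/4) * exp (m * s)) T \<le> (\<lambda>s. (y s - h0/m + e/4) * exp (m * s)) t"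
    proof (rule DERIV_nonneg_imp_increasing_open[OF t])
      fix x assume x: "T < x" "x < t"
      have "\<bar>h x - h0\<bar> < m*e/4" using T(2)[of x] x by simp
      hence "- (m*e/4) < h x - h0 \<and> h x - h0 < m*e/4" by arith
      hence "(h x - h0 + m*e/4) * exp (m*x) \<ge> 0"
        by (intro mult_nonneg_nonneg) auto
      then show "\<exists>d. ((\<lambda>s. (y s - h0/m + e/4) * exp (m * s)) has_real_derivative d) (at x) \<and> d \<ge> 0"
        using dy[of x] x T m
        by (intro exI[of _ "(h x - h0 + m*e/4) * exp (m*x)"])
           (auto intro!: derivative_eq_intros simp: field_simps)
    next
      show "continuous_on {T..t} (\<lambda>s. (y s - h0/m + e/4) * exp (m * s))"
        using dy T by (intro continuous_intros cont_from_deriv[of _ y "\<lambda>t. h t - m * y t"]) auto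
    qed
    hence "y t - h0/m + e/4 \<ge> (y T - h0/m + e/4) * (exp (m*T) / exp (m*t))"
      by (simp add: field_simps)
    also have "exp (m*T) / exp (m*t) = exp (- m * (t - T))"
      by (simp add: exp_diff[symmetric] algebra_simps)
    also have "(y T - h0/m + e/4) * exp (- m * (t - T)) \<ge> - A * exp (- m * (t - T))"
      by (intro mult_right_mono) (auto simp: A_def)
    finally show "y t - h0/m + e/4 \<ge> - A * exp (- m * (t - T))" .
  qed
  have "\<forall>\<^sub>F t in at_top. t \<ge> T" by (rule eventually_ge_at_top)
  with ev have "\<forall>\<^sub>F t in at_top. t \<ge> T \<and> A * exp (- m * (t - T)) < e/4"
    by (simp add: eventually_conj)
  then show "\<forall>\<^sub>F t in at_top. dist (y t) (h0/m) < e"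
  proof (rule eventually_mono)
    fix t assume "t \<ge> T \<and> A * exp (- m * (t - T)) < e / 4"
    then show "dist (y t) (h0/m) < e" using up[of t] lo[of t] e by (auto simp: dist_real_def abs_less_iff)
  qed
qed


lemma two_mult_ge: "(0::real) \<le> x \<Longrightarrow> x \<le> 2 * x" by simp

locale eqm =
  fixes bh bv mh mv Cvh Chv tau sh ih sv iv :: real
  assumes bh_pos: "bh > 0" and bv_pos: "bv > 0" and mh_pos: "mh > 0" and mv_pos: "mv > 0"
    and Cvh_pos: "Cvh > 0" and Chv_pos: "Chv > 0" and tau_nn: "tau \<ge> 0"
    and sh_pos: "sh > 0" and ih_pos: "ih > 0" and sv_pos: "sv > 0" and iv_pos: "iv > 0"
    and e1: "bh - Cvh * (iv / (sv + iv)) * sh - mh * sh = 0"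
    and e2: "Cvh * (iv / (sv + iv)) * sh - mh * ih = 0"
    and e3: "bv - Chv * ih * sv - mv * sv = 0"
    and e4: "Chv * ih * sv - mv * iv = 0"
begin

definition "N = sv + iv"
definition "Fs = mh * ih"
definition "a = Fs / (mv * iv)"
definition "alpha = 2 * Fs / (iv * N)"
definition "c = alpha^2 * sv / (a * mv^2)"
definition "k = min (mh / (2* sh)) (a * mv / (4* sv))"

lemma N_pos: "N > 0" using sv_pos iv_pos by (simp add: N_def)
lemma Fs_pos: "Fs > 0" using mh_pos ih_pos by (simp add: Fs_def)
lemma a_pos: "a > 0" using Fs_pos mv_pos iv_pos by (simp add: a_def)
lemma alpha_pos: "alpha > 0" using Fs_pos iv_pos N_pos by (simp add: alpha_def)
lemma c_pos: "c > 0" using alpha_pos sv_pos a_pos mv_pos by (simp add: c_def)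
lemma k_pos: "k > 0" using mh_pos sh_pos a_pos mv_pos sv_pos by (simp add: k_def)

lemma bv_eq: "bv = mv * N" using e3 e4 by (simp add: N_def algebra_simps)
lemma Fs_eq: "Fs = Cvh * iv * sh / N" using e2 N_pos by (simp add: Fs_def N_def field_simps)
lemma bh_eq: "bh = Fs + mh * sh" using e1 e2 by (simp add: Fs_def)
lemma H_eq: "Chv * ih * sv = mv * iv" using e4 by simp
lemma a_eq: "a * (mv * iv) = Fs" using mv_pos iv_pos by (simp add: a_def)

lemma key_ineq:
  fixes S I U V Q :: real
  assumes S: "S > 0" "S \<le> 2* sh" and I: "I > 0" and U: "U > 0" "U \<le> 2* sv" and V: "V > 0"
    and Q: "Q > 0" and NV: "U + V \<ge> N/2"
  shows "(1 - sh/S) * (bh - Cvh * (V/(U+V)) * S - mh * S) + (1 - ih/I) * (Q - mh * I)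
     + a * ((1 - sv/U) * (bv - Chv * I * U - mv * U) + (1 - iv/V) * (Chv * I * U - mv * V))
     + Fs * (GG (Cvh * V * S / (U+V) / Fs) - GG (Q / Fs))
     + 2 * c * (U + V - N) * (bv - mv * (U + V))
     \<le> - k * ((S - sh)^2 + (U - sv)^2)"
proof -
  define Nv where "Nv = U + V"
  define P where "P = Cvh * V * S / Nv"
  define r where "r = N / Nv"
  define u1 where "u1 = sh / S"
  define u2 where "u2 = sv / U"
  define u3 where "u3 = Q / Fs * ih / I"
  define Hr where "Hr = I * U / (ih * sv)"
  define u4 where "u4 = Hr * iv / V"
  define d where "d = Nv - N"
  define e where "e = U - sv"
  have Nv: "Nv > 0" using U V by (simp add: Nv_def)
  have Fs: "Fs > 0" by (rule Fs_pos)
  have NN: "N > 0" by (rule N_pos)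
  have h1: "(1 - sh/S) * (bh - Cvh * (V/(U+V)) * S - mh * S)
      = - mh * (S - sh)^2 / S + Fs - P - Fs * u1 + Fs * (V/iv) * r"
  proof -
    have p1: "Cvh * (V/(U+V)) * S = P" by (simp add: P_def Nv_def)
    have p2: "P * (sh/S) = Fs * (V/iv) * r" unfolding P_def r_def Fs_eq
      using S iv_pos NN Nv by (simp add: field_simps)
    have p3: "(1 - sh/S) * (mh * sh - mh * S) = - mh * (S - sh)^2 / S"
      using S by (simp add: field_simps power2_eq_square; simp add: algebra_simps)
    have "(1 - sh/S) * (bh - Cvh * (V/(U+V)) * S - mh * S)
       = (1 - sh/S) * (mh * sh - mh * S) + (Fs - P) - Fs * (sh/S) + P * (sh/S)"
      unfolding p1 bh_eq by (simp add: algebra_simps)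
    then show ?thesis using p2 p3 by (simp add: u1_def)
  qed
  have h2: "(1 - ih/I) * (Q - mh * I) = Q - Fs * (I/ih) - Fs * u3 + Fs"
  proof -
    have "(1 - ih/I) * (Q - mh * I) = Q - mh * I - Q * (ih / I) + mh * ih"
      using I by (simp add: algebra_simps)
    moreover have "mh * I = Fs * (I/ih)" using ih_pos by (simp add: Fs_def)
    moreover have "Q * (ih / I) = Fs * u3" using Fs by (simp add: u3_def)
    ultimately show ?thesis by (simp add: Fs_def)
  qed
  have aC: "a * Chv * I * U = Fs * Hr"
  proof -
    have "a * Chv * (ih * sv) = Fs" using a_eq H_eq by (metis mult.assoc)
    then show ?thesis using ih_pos sv_pos by (simp add: Hr_def field_simps)
  qed
  have h3: "a * ((1 - sv/U) * (bv - Chv * I * U - mv * U))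
      = - a * mv * (U - sv)^2 / U + Fs * (1 - u2 - Hr + I/ih)"
  proof -
    have bv2: "bv = mv * sv + mv * iv" using bv_eq by (simp add: N_def algebra_simps)
    have q1: "a * ((1 - sv/U) * (mv * sv - mv * U)) = - a * mv * (U - sv)^2 / U"
      using U by (simp add: field_simps power2_eq_square; simp add: algebra_simps)
    have q2: "a * ((1 - sv/U) * (mv * iv - Chv * I * U)) = Fs * (1 - u2 - Hr + I/ih)"
    proof -
      have "a * ((1 - sv/U) * (mv * iv - Chv * I * U))
          = a * (mv * iv) - a * (mv * iv) * (sv/U) - a * Chv * I * U + (a * Chv * I * U) * (sv / U)"
        by (simp add: algebra_simps)
      also have "\<dots> = Fs - Fs * (sv/U) - Fs * Hr + Fs * Hr * (sv/U)" using a_eq aC by simp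
      also have "\<dots> = Fs - Fs * (sv/U) - Fs * Hr + Fs * (I/ih)"
      proof -
        have "Hr * (sv/U) = I/ih" using U sv_pos by (simp add: Hr_def field_simps)
        then show ?thesis by (metis mult.assoc)
      qed
      finally show ?thesis by (simp add: u2_def algebra_simps)
    qed
    have "a * ((1 - sv/U) * (bv - Chv * I * U - mv * U))
       = a * ((1 - sv/U) * (mv * sv - mv * U)) + a * ((1 - sv/U) * (mv * iv - Chv * I * U))"
      unfolding bv2 by (simp add: algebra_simps)
    then show ?thesis using q1 q2 by simp
  qed
  have h4: "a * ((1 - iv/V) * (Chv * I * U - mv * V)) = Fs * (Hr - V/iv - u4 + 1)"
  proof -
    have "a * ((1 - iv/V) * (Chv * I * U - mv * V))
        = a * Chv * I * U - a * mv * V - (a * Chv * I * U) * (iv / V) + a * (mv * iv)"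
      using V by (simp add: algebra_simps)
    also have "\<dots> = Fs * Hr - a * mv * V - Fs * Hr * (iv/V) + Fs" using aC a_eq by simp
    also have "\<dots> = Fs * Hr - Fs * (V / iv) - Fs * Hr * (iv/V) + Fs"
    proof -
      have "a * mv * V = Fs * (V / iv)" using a_eq iv_pos by (simp add: field_simps)
      then show ?thesis by simp
    qed
    finally show ?thesis by (simp add: u4_def algebra_simps)
  qed
  have h6: "2 * c * (U + V - N) * (bv - mv * (U + V)) = - 2 * c * mv * d^2"
    unfolding bv_eq d_def Nv_def by (simp add: algebra_simps power2_eq_square)
  have PF: "P / Fs = (V/iv) * (S/sh) * r" unfolding P_def r_def Fs_eq
    using S iv_pos NN Nv sh_pos Cvh_pos by (simp add: field_simps)
  have h5: "GG (Cvh * V * S / (U+V) / Fs) - GG (Q / Fs) = P/Fs - Q/Fs - ln (P/Fs) + ln (Q/Fs)"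
    by (simp add: GG_def P_def Nv_def)
  have r0: "r > 0" using NN Nv by (simp add: r_def)
  have lP: "ln (P/Fs) = ln (V/iv) + ln (S/sh) + ln r"
  proof -
    have "ln ((V/iv) * (S/sh) * r) = ln ((V/iv) * (S/sh)) + ln r"
      using V iv_pos S sh_pos r0 by (intro ln_mult_pos) auto
    also have "ln ((V/iv) * (S/sh)) = ln (V/iv) + ln (S/sh)"
      using V iv_pos S sh_pos by (intro ln_mult_pos) auto
    finally show ?thesis unfolding PF .
  qed
  have i1: "- ln (S/sh) \<le> u1 - 1"
    using ln_le_minus_one[of "sh/S"] S sh_pos by (simp add: u1_def ln_div)
  have i2: "- ln (U/sv) \<le> u2 - 1"
    using ln_le_minus_one[of "sv/U"] U sv_pos by (simp add: u2_def ln_div)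
  have i3: "ln (Q/Fs) - ln (I/ih) \<le> u3 - 1"
    using ln_le_minus_one[of u3] Q Fs I ih_pos by (simp add: u3_def ln_div ln_mult)
  have i4: "ln (I/ih) + ln (U/sv) - ln (V/iv) \<le> u4 - 1"
    using ln_le_minus_one[of u4] I ih_pos U sv_pos V iv_pos by (simp add: u4_def Hr_def ln_div ln_mult)
  have i5: "ln r \<ge> 1 - Nv/N"
    using ln_ge_one_minus_inv[OF r0] by (simp add: r_def)
  have lnb: "ln (Q/Fs) - ln (P/Fs) \<le> u1 + u2 + u3 + u4 - 5 + Nv/N"
    using lP i1 i2 i3 i4 i5 by linarith
  define LHS where "LHS = (1 - sh/S) * (bh - Cvh * (V/(U+V)) * S - mh * S) + (1 - ih/I) * (Q - mh * I)
     + a * ((1 - sv/U) * (bv - Chv * I * U - mv * U) + (1 - iv/V) * (Chv * I * U - mv * V))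
     + Fs * (GG (Cvh * V * S / (U+V) / Fs) - GG (Q / Fs))
     + 2 * c * (U + V - N) * (bv - mv * (U + V))"
  define X where "X = - mh * (S - sh)^2 / S + Fs - P - Fs * u1 + Fs * (V/iv) * r
     + (Q - Fs * (I/ih) - Fs * u3 + Fs) + (- a * mv * (U - sv)^2 / U + Fs * (1 - u2 - Hr + I/ih))
     + Fs * (Hr - V/iv - u4 + 1) + Fs * (P/Fs - Q/Fs) - 2 * c * mv * d^2"
  have "LHS = (1 - sh/S) * (bh - Cvh * (V/(U+V)) * S - mh * S) + (1 - ih/I) * (Q - mh * I)
     + a * ((1 - sv/U) * (bv - Chv * I * U - mv * U)) + a * ((1 - iv/V) * (Chv * I * U - mv * V))
     + Fs * (GG (Cvh * V * S / (U+V) / Fs) - GG (Q / Fs))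
     + 2 * c * (U + V - N) * (bv - mv * (U + V))" unfolding LHS_def by (simp add: distrib_left)
  also have "\<dots> = X + Fs * (ln (Q/Fs) - ln (P/Fs))"
    unfolding h1 h2 h3 h4 h5 h6 X_def by (simp add: algebra_simps)
  also have "\<dots> \<le> X + Fs * (u1 + u2 + u3 + u4 - 5 + Nv/N)"
    using lnb Fs by (simp add: mult_left_mono)
  also have "\<dots> = - mh * (S - sh)^2 / S - a * mv * e^2 / U - 2 * c * mv * d^2
       + Fs * ((V/iv) * (r - 1) + Nv/N - 1)"
  proof -
    have f1: "Fs * (P/Fs - Q/Fs) = P - Q" using Fs by (simp add: field_simps)
    have f2: "Fs * (V/iv) * r = Fs * ((V/iv) * (r - 1)) + Fs * (V/iv)" by (simp add: right_diff_distrib)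
    have f3: "Fs * ((V/iv) * (r - 1) + Nv/N - 1) = Fs * ((V/iv) * (r - 1)) + Fs * (Nv/N) - Fs"
      by (simp add: algebra_simps)
    have f4: "Fs * (u1 + u2 + u3 + u4 - 5 + Nv/N) = Fs * u1 + Fs * u2 + Fs * u3 + Fs * u4 - 5 * Fs + Fs * (Nv/N)"
      by (simp add: algebra_simps)
    have f5: "Fs * (1 - u2 - Hr + I/ih) = Fs - Fs * u2 - Fs * Hr + Fs * (I/ih)" by (simp add: algebra_simps)
    have f6: "Fs * (Hr - V/iv - u4 + 1) = Fs * Hr - Fs * (V/iv) - Fs * u4 + Fs" by (simp add: algebra_simps)
    show ?thesis unfolding X_def e_def f1 by (simp add: algebra_simps add_divide_distrib diff_divide_distrib)
  qed
  also have "\<dots> \<le> - k * ((S - sh)^2 + (U - sv)^2)"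
  proof -
    have Vd: "V = Nv - U" by (simp add: Nv_def)
    have ivN: "iv = N - sv" by (simp add: N_def)
    have pert: "Fs * ((V/iv) * (r - 1) + Nv/N - 1) = Fs * d * (N * e - sv * d) / (N * iv * Nv)"
    proof -
      have r1: "r - 1 = - d / Nv" unfolding r_def d_def using Nv by (simp add: field_simps)
      have n1: "Nv/N - 1 = d/N" unfolding d_def using NN by (simp add: field_simps)
      have poly: "iv * Nv - V * N = N * e - sv * d" unfolding e_def d_def Vd N_def by (simp add: algebra_simps)
      have "(V/iv) * (- d / Nv) + d/N = d * (iv * Nv - V * N) / (N * iv * Nv)"
        using NN Nv iv_pos by (simp add: field_simps)
      then have "(V/iv) * (r - 1) + Nv/N - 1 = d * (iv * Nv - V * N) / (N * iv * Nv)"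
        using r1 n1 by simp
      then have "(V/iv) * (r - 1) + Nv/N - 1 = d * (N * e - sv * d) / (N * iv * Nv)"
        unfolding poly[symmetric] .
      then show ?thesis by simp
    qed
    have NvN: "Nv \<ge> N/2" using NV by (simp add: Nv_def)
    have p1: "Fs * d * (N * e - sv * d) / (N * iv * Nv) \<le> alpha * \<bar>d * e\<bar>"
    proof -
      have "Fs * d * (N * e - sv * d) / (N * iv * Nv) = Fs * (d * e) / (iv * Nv) - Fs * sv * d^2 / (N * iv * Nv)"
        using NN Nv iv_pos by (simp add: field_simps power2_eq_square)
      also have "\<dots> \<le> Fs * (d * e) / (iv * Nv)"
        using Fs sv_pos NN iv_pos Nv by simp
      also have "\<dots> \<le> Fs * \<bar>d * e\<bar> / (iv * Nv)"
        using Fs iv_pos Nv by (intro divide_right_mono mult_left_mono) auto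
      also have "\<dots> \<le> Fs * \<bar>d * e\<bar> / (iv * (N/2))"
        using Fs iv_pos Nv NvN NN by (intro divide_left_mono mult_left_mono mult_nonneg_nonneg mult_pos_pos) auto
      also have "\<dots> = alpha * \<bar>d * e\<bar>" by (simp add: alpha_def)
      finally show ?thesis .
    qed
    define \<beta> where "\<beta> = a * mv / (4 * sv)"
    have \<beta>: "\<beta> > 0" using a_pos mv_pos sv_pos by (simp add: \<beta>_def)
    have amgm: "alpha * \<bar>d * e\<bar> \<le> \<beta> * e^2 + alpha^2 * d^2 / (4 * \<beta>)"
    proof -
      have "0 \<le> (\<beta> * \<bar>e\<bar> - alpha * \<bar>d\<bar> / 2)^2" by simp
      hence "alpha * \<bar>d * e\<bar> * \<beta> \<le> \<beta>^2 * e^2 + alpha^2 * d^2 / 4"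
        by (simp add: power2_eq_square algebra_simps abs_mult)
      then show ?thesis using \<beta> by (simp add: field_simps power2_eq_square)
    qed
    have cbound: "alpha^2 * d^2 / (4 * \<beta>) \<le> 2 * c * mv * d^2"
    proof -
      have "alpha^2 * d^2 / (4 * \<beta>) = alpha^2 * sv * d^2 / (a * mv)"
        using a_pos mv_pos sv_pos by (simp add: \<beta>_def field_simps)
      also have "\<dots> \<le> 2 * (alpha^2 * sv * d^2 / (a * mv))"
      proof -
        have "alpha^2 * sv * d^2 / (a * mv) \<ge> 0" using a_pos mv_pos sv_pos by simp
        then show ?thesis by (rule two_mult_ge)
      qed
      also have "\<dots> = 2 * c * mv * d^2" using a_pos mv_pos by (simp add: c_def field_simps power2_eq_square)
      finally show ?thesis .
    qed
    have ub: "a * mv * e^2 / U \<ge> 2 * \<beta> * e^2"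
    proof -
      have "2 * \<beta> * e^2 = a * mv * e^2 / (2 * sv)" using sv_pos by (simp add: \<beta>_def field_simps)
      also have "\<dots> \<le> a * mv * e^2 / U" using U a_pos mv_pos
        by (intro divide_left_mono mult_nonneg_nonneg) auto
      finally show ?thesis .
    qed
    have sb: "mh * (S - sh)^2 / S \<ge> mh * (S - sh)^2 / (2 * sh)"
      using S mh_pos by (intro divide_left_mono mult_nonneg_nonneg) auto
    have kb: "k * ((S - sh)^2 + e^2) \<le> mh * (S - sh)^2 / (2 * sh) + \<beta> * e^2"
    proof -
      have "k * (S - sh)^2 \<le> mh / (2 * sh) * (S - sh)^2" by (intro mult_right_mono) (auto simp: k_def)
      moreover have "k * e^2 \<le> \<beta> * e^2" by (intro mult_right_mono) (auto simp: k_def \<beta>_def)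
      ultimately show ?thesis by (simp add: distrib_left)
    qed
    show ?thesis using pert p1 amgm cbound ub sb kb unfolding e_def by linarith
  qed
  finally show ?thesis unfolding LHS_def .
qed

end

lemma R0_gt: assumes "R0 bh bv mh mv Cvh Chv > 1" "mh > 0" "mv > 0"
  shows "Cvh * Chv * bh > mh^2 * mv"
proof -
  have "sqrt 1 < sqrt (Cvh * Chv * bh / (mh\<^sup>2 * mv))" using assms(1) by (simp add: R0_def)
  hence "1 < Cvh * Chv * bh / (mh\<^sup>2 * mv)" by (simp only: real_sqrt_less_iff)
  then show ?thesis using assms(2,3) by (simp add: field_simps)
qed

definition "ihf bh bv mh mv Cvh Chv = (Cvh * Chv * bh - mh^2 * mv) / (mh * Chv * (Cvh + mh))"
definition "E0 bh bv mh mv Cvh Chv =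
  (let x = ihf bh bv mh mv Cvh Chv; s = bv / (Chv * x + mv) in (bh/mh - x, x, s, bv/mv - s))"

lemma E0_endemic:
  fixes bh bv mh mv Cvh Chv :: real
  assumes pos: "bh > 0" "bv > 0" "mh > 0" "mv > 0" "Cvh > 0" "Chv > 0"
    and R: "R0 bh bv mh mv Cvh Chv > 1"
  shows "endemic_equilibrium bh bv mh mv Cvh Chv (E0 bh bv mh mv Cvh Chv)"
proof -
  define x where "x = ihf bh bv mh mv Cvh Chv"
  define q where "q = Chv * x + mv"
  define s where "s = bv / q"
  define h where "h = bh/mh - x"
  define i where "i = bv/mv - s"
  have big: "Cvh * Chv * bh > mh^2 * mv" using R0_gt[OF R pos(3,4)] .
  have x: "x > 0" using big pos by (simp add: x_def ihf_def)
  have D: "mh * Chv * (Cvh + mh) > 0" using pos by simp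
  have "x * (mh * Chv * (Cvh + mh)) = Cvh * Chv * bh - mh^2 * mv"
  proof -
    have "Cvh + mh \<noteq> 0" "mh \<noteq> 0" "Chv \<noteq> 0" using pos by auto
    then show ?thesis by (simp add: x_def ihf_def)
  qed
  hence "mh * (x * (Chv * (Cvh + mh))) = mh * (Cvh * Chv * bh / mh - mh * mv)"
    using pos by (simp add: algebra_simps power2_eq_square)
  then have xdef: "x * (Chv * (Cvh + mh)) = Cvh * Chv * bh / mh - mh * mv"
    using pos by simp
  have q: "q > 0" unfolding q_def using x pos by (intro add_pos_pos mult_pos_pos) auto
  have s: "s > 0" using q pos by (simp add: s_def)
  have hpos: "h > 0"
  proof -
    have "mh * mv > 0" "Chv * bh > 0" using pos by auto
    hence "x * (Chv * (Cvh + mh)) < Cvh * Chv * bh / mh + Chv * bh" using xdef by linarith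
    also have "\<dots> = (bh/mh) * (Chv * (Cvh + mh))" using pos by (simp add: field_simps)
    finally have "x * (Chv * (Cvh + mh)) < (bh/mh) * (Chv * (Cvh + mh))" .
    hence "x < bh/mh" by (rule mult_right_less_imp_less) (use pos in auto)
    then show ?thesis by (simp add: h_def)
  qed
  have iq: "i = bv * Chv * x / (mv * q)" using q pos by (simp add: i_def s_def q_def field_simps)
  have i: "i > 0" unfolding iq using pos x q by simp
  have si: "s + i = bv / mv" by (simp add: i_def)
  have ratio: "i / (s + i) = Chv * x / q"
  proof -
    have "i / (s + i) = i / (bv / mv)" using si by simp
    also have "\<dots> = Chv * x / q" unfolding iq using pos q by (simp add: field_simps)
    finally show ?thesis .
  qed
  have key: "Cvh * Chv * h = mh * q"
  proof -
    have "Cvh * Chv * h = Cvh * Chv * bh / mh - Cvh * Chv * x" using pos by (simp add: h_def algebra_simps)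
    also have "\<dots> = x * (Chv * (Cvh + mh)) + mh * mv - Cvh * Chv * x" using xdef by simp
    also have "\<dots> = mh * q" by (simp add: q_def algebra_simps)
    finally show ?thesis .
  qed
  have eq2: "Cvh * (i / (s + i)) * h - mh * x = 0"
  proof -
    have "Cvh * (i / (s + i)) * h = (Cvh * Chv * h) * x / q" unfolding ratio by simp
    also have "\<dots> = mh * x" unfolding key using q by simp
    finally show ?thesis by simp
  qed
  have eq1: "bh - Cvh * (i / (s + i)) * h - mh * h = 0"
    using eq2 pos by (simp add: h_def algebra_simps)
  have eq3: "bv - Chv * x * s - mv * s = 0"
    using q pos by (simp add: s_def q_def field_simps)
  have eq4: "Chv * x * s - mv * i = 0"
  proof -
    have "mv * i = bv - mv * s" using pos by (simp add: i_def right_diff_distrib)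
    then show ?thesis using eq3 by linarith
  qed
  have E: "E0 bh bv mh mv Cvh Chv = (h, x, s, i)"
    by (simp add: E0_def Let_def x_def[symmetric] q_def[symmetric] s_def[symmetric] h_def i_def)
  show ?thesis unfolding E endemic_equilibrium_def is_equilibrium_def
    using eq1 eq2 eq3 eq4 hpos x s i by simp
qed

lemma endemic_is_E0:
  fixes bh bv mh mv Cvh Chv :: real
  assumes pos: "bh > 0" "bv > 0" "mh > 0" "mv > 0" "Cvh > 0" "Chv > 0"
    and E: "endemic_equilibrium bh bv mh mv Cvh Chv (sh, ih, sv, iv)"
  shows "(sh, ih, sv, iv) = E0 bh bv mh mv Cvh Chv"
proof -
  have P: "sh > 0" "ih > 0" "sv > 0" "iv > 0" using E by (auto simp: endemic_equilibrium_def)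
  have e: "bh - Cvh * (iv / (sv + iv)) * sh - mh * sh = 0"
       "Cvh * (iv / (sv + iv)) * sh - mh * ih = 0"
       "bv - Chv * ih * sv - mv * sv = 0"
       "Chv * ih * sv - mv * iv = 0"
    using E by (auto simp: endemic_equilibrium_def is_equilibrium_def)
  interpret eqm bh bv mh mv Cvh Chv 0 sh ih sv iv
    using pos P e by unfold_locales auto
  define q where "q = Chv * ih + mv"
  have q: "q > 0" unfolding q_def using pos P by (intro add_pos_pos mult_pos_pos) auto
  have sv: "sv = bv / q" using e(3) q by (simp add: q_def field_simps)
  have ivv: "iv = Chv * ih * sv / mv" using e(4) pos by (simp add: field_simps)
  have Nb: "N = bv / mv" using bv_eq pos by simp
  have "mh * ih * N = Cvh * iv * sh" using Fs_eq N_pos by (simp add: Fs_def field_simps)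
  hence "mh * ih * N * mv = Cvh * Chv * ih * sv * sh" unfolding ivv using pos by (simp add: field_simps)
  hence "mh * N * mv = Cvh * Chv * sv * sh" using P by (simp add: algebra_simps)
  hence "mh * bv = Cvh * Chv * sv * sh" unfolding Nb using pos by simp
  hence k1: "mh * q = Cvh * Chv * sh" unfolding sv using q pos by (simp add: field_simps)
  have shh: "sh = bh/mh - ih" using bh_eq pos by (simp add: Fs_def field_simps)
  have "ih * (Chv * (Cvh + mh)) = Cvh * Chv * bh / mh - mh * mv"
    using k1 unfolding shh q_def using pos by (simp add: field_simps)
  hence "mh * (ih * (Chv * (Cvh + mh))) = mh * (Cvh * Chv * bh / mh - mh * mv)" by simp
  also have "\<dots> = Cvh * Chv * bh - mh^2 * mv" using pos by (simp add: right_diff_distrib power2_eq_square)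
  finally have h': "ih * (mh * Chv * (Cvh + mh)) = Cvh * Chv * bh - mh^2 * mv" by (simp add: algebra_simps)
  have "mh * Chv * (Cvh + mh) \<noteq> 0" using pos by simp
  hence ihx: "ih = ihf bh bv mh mv Cvh Chv"
    using h' by (simp add: ihf_def eq_divide_eq)
  have "iv = bv/mv - sv" using Nb by (simp add: N_def)
  then show ?thesis
    by (simp add: E0_def Let_def ihx[symmetric] q_def[symmetric] sv[symmetric] shh)
qed

lemma unique_endemic:
  fixes bh bv mh mv Cvh Chv :: real
  assumes pos: "bh > 0" "bv > 0" "mh > 0" "mv > 0" "Cvh > 0" "Chv > 0"
    and R: "R0 bh bv mh mv Cvh Chv > 1"
  shows "\<exists>!E. endemic_equilibrium bh bv mh mv Cvh Chv E"
proof (rule ex1I[of _ "E0 bh bv mh mv Cvh Chv"])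
  show "endemic_equilibrium bh bv mh mv Cvh Chv (E0 bh bv mh mv Cvh Chv)"
    using E0_endemic[OF pos R] .
  fix E assume "endemic_equilibrium bh bv mh mv Cvh Chv E"
  then show "E = E0 bh bv mh mv Cvh Chv"
    using endemic_is_E0[OF pos] by (cases E) auto
qed


lemma GG_comp_deriv:
  assumes "x > 0" "f y > 0" "(f has_real_derivative D) (at y)"
  shows "((\<lambda>t. x * GG (f t / x)) has_real_derivative (1 - x / f y) * D) (at y)"
  unfolding GG_def using assms
  by (auto intro!: derivative_eq_intros simp: field_simps)

context eqm
begin
definition "rho0 = min (min sh ih) (min sv iv) / 20"
lemma rho0_pos: "rho0 > 0" using sh_pos ih_pos sv_pos iv_pos by (simp add: rho0_def)
lemma rho0_le: "rho0 \<le> sh/20" "rho0 \<le> ih/20" "rho0 \<le> sv/20" "rho0 \<le> iv/20"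
  by (auto simp: rho0_def)
end

locale sol = eqm +
  fixes Sh Ih Sv Iv :: "real \<Rightarrow> real"
  assumes solution: "is_solution bh bv mh mv Cvh Chv tau Sh Ih Sv Iv"
begin

definition "dev t = max (max \<bar>Sh t - sh\<bar> \<bar>Ih t - ih\<bar>) (max \<bar>Sv t - sv\<bar> \<bar>Iv t - iv\<bar>)"
definition "clp y = max (1/2) (min y 2)"
definition "Ft s = Cvh * Iv (max s (-tau)) * Sh (max s (-tau)) / max (Sv (max s (-tau)) + Iv (max s (-tau))) (N/2)"
definition "gt s = GG (clp (Ft s / Fs))"
definition "Phi t = integral {-tau-1..t} gt"
definition "Qd t = Cvh * (Iv (t - tau) / (Sv (t - tau) + Iv (t - tau))) * Sh (t - tau)"
definition "W t = sh * GG (Sh t / sh) + ih * GG (Ih t / ih) + a * (sv * GG (Sv t / sv) + iv * GG (Iv t / iv))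
   + Fs * (Phi t - Phi (t - tau)) + c * (Sv t + Iv t - N)^2"
definition "Wd t = (1 - sh / Sh t) * (bh - Cvh * (Iv t / (Sv t + Iv t)) * Sh t - mh * Sh t)
   + (1 - ih / Ih t) * (Qd t - mh * Ih t)
   + a * ((1 - sv / Sv t) * (bv - Chv * Ih t * Sv t - mv * Sv t) + (1 - iv / Iv t) * (Chv * Ih t * Sv t - mv * Iv t))
   + Fs * (gt t - gt (t - tau)) + 2 * c * (Sv t + Iv t - N) * (bv - mv * (Sv t + Iv t))"


lemma cont: "continuous_on {-tau..} Sh" "continuous_on {-tau..} Ih"
    "continuous_on {-tau..} Sv" "continuous_on {-tau..} Iv"
  using solution by (auto simp: is_solution_def)

lemma derivs:
  assumes "t > 0"
  shows "(Sh has_real_derivative (bh - Cvh * (Iv t / (Sv t + Iv t)) * Sh t - mh * Sh t)) (at t)"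
    "(Ih has_real_derivative (Qd t - mh * Ih t)) (at t)"
    "(Sv has_real_derivative (bv - Chv * Ih t * Sv t - mv * Sv t)) (at t)"
    "(Iv has_real_derivative (Chv * Ih t * Sv t - mv * Iv t)) (at t)"
  using solution assms by (auto simp: is_solution_def Qd_def intro!: deriv_at_of_within)

lemma dev_cont: "continuous_on {-tau..} dev"
  unfolding dev_def using cont by (intro continuous_intros) auto

lemma reg:
  assumes "dev s \<le> rho0"
  shows "19/20 * sh \<le> Sh s" "Sh s \<le> 21/20 * sh" "19/20 * ih \<le> Ih s" "Ih s \<le> 21/20 * ih"
    "19/20 * sv \<le> Sv s" "Sv s \<le> 21/20 * sv" "19/20 * iv \<le> Iv s" "Iv s \<le> 21/20 * iv"
    "19/20 * N \<le> Sv s + Iv s" "Sv s + Iv s \<le> 21/20 * N"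
proof -
  have d: "\<bar>Sh s - sh\<bar> \<le> rho0" "\<bar>Ih s - ih\<bar> \<le> rho0" "\<bar>Sv s - sv\<bar> \<le> rho0" "\<bar>Iv s - iv\<bar> \<le> rho0"
    using assms by (auto simp: dev_def)
  note r = rho0_le
  show "19/20 * sh \<le> Sh s" using d(1) r(1) by arith
  show "Sh s \<le> 21/20 * sh" using d(1) r(1) by arith
  show "19/20 * ih \<le> Ih s" using d(2) r(2) by arith
  show "Ih s \<le> 21/20 * ih" using d(2) r(2) by arith
  show f5: "19/20 * sv \<le> Sv s" using d(3) r(3) by arith
  show f6: "Sv s \<le> 21/20 * sv" using d(3) r(3) by arith
  show f7: "19/20 * iv \<le> Iv s" using d(4) r(4) by arith
  show f8: "Iv s \<le> 21/20 * iv" using d(4) r(4) by arith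
  show "19/20 * N \<le> Sv s + Iv s" using f5 f7 unfolding N_def by (simp add: distrib_left)
  show "Sv s + Iv s \<le> 21/20 * N" using f6 f8 unfolding N_def by (simp add: distrib_left)
qed

lemma reg_pos:
  assumes "dev s \<le> rho0"
  shows "Sh s > 0" "Ih s > 0" "Sv s > 0" "Iv s > 0" "Sh s \<le> 2 * sh" "Sv s \<le> 2 * sv"
    "Sv s + Iv s \<ge> N/2" "Sh s / sh \<le> 2" "Ih s / ih \<le> 2" "Sv s / sv \<le> 2" "Iv s / iv \<le> 2"
    "Sh s \<ge> sh/2" "Ih s \<ge> ih/2" "Sv s \<ge> sv/2" "Iv s \<ge> iv/2"
  using reg[OF assms] sh_pos ih_pos sv_pos iv_pos N_pos by (auto simp: pos_divide_le_eq)

lemma ratio_aux: "iv > 0 \<Longrightarrow> sh > 0 \<Longrightarrow> N > 0 \<Longrightarrow> Nv > 0 \<Longrightarrow> Cvh > 0 \<Longrightarrow>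
   Cvh * V * S / Nv / (Cvh * iv * sh / N) = (V / iv) * (S / sh) * (N / Nv)" for V S Nv :: real
  by (simp add: field_simps)

lemma Fx_ratio:
  assumes "dev s \<le> rho0"
  shows "Cvh * Iv s * Sh s / (Sv s + Iv s) / Fs = (Iv s / iv) * (Sh s / sh) * (N / (Sv s + Iv s))"
  unfolding Fs_eq using reg_pos[OF assms] iv_pos sh_pos N_pos Cvh_pos by (intro ratio_aux) auto

lemma Fx_bounds:
  assumes "dev s \<le> rho0"
  shows "Cvh * Iv s * Sh s / (Sv s + Iv s) / Fs \<ge> 1/2" "Cvh * Iv s * Sh s / (Sv s + Iv s) / Fs \<le> 2"
proof -
  define A where "A = Iv s / iv"
  define B where "B = Sh s / sh"
  define C where "C = N / (Sv s + Iv s)"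
  note r = reg[OF assms]
  have A: "A \<ge> 19/20" "A \<le> 21/20" using r(7,8) iv_pos by (auto simp: A_def field_simps)
  have B: "B \<ge> 19/20" "B \<le> 21/20" using r(1,2) sh_pos by (auto simp: B_def field_simps)
  have Np: "Sv s + Iv s > 0" using reg_pos[OF assms] by simp
  have C: "C \<ge> 20/21" "C \<le> 20/19" using r(9,10) N_pos Np by (auto simp: C_def field_simps)
  have "(19/20) * (19/20) \<le> A * B" using A B by (intro mult_mono) auto
  hence "(19/20) * (19/20) * (20/21) \<le> A * B * C" using A B C by (intro mult_mono) auto
  then show "Cvh * Iv s * Sh s / (Sv s + Iv s) / Fs \<ge> 1/2"
    unfolding Fx_ratio[OF assms] A_def[symmetric] B_def[symmetric] C_def[symmetric] by simp
  have "A * B \<le> (21/20) * (21/20)" using A B by (intro mult_mono) auto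
  hence "A * B * C \<le> (21/20) * (21/20) * (20/19)" using A B C by (intro mult_mono) auto
  then show "Cvh * Iv s * Sh s / (Sv s + Iv s) / Fs \<le> 2"
    unfolding Fx_ratio[OF assms] A_def[symmetric] B_def[symmetric] C_def[symmetric] by simp
qed

lemma gt_eq:
  assumes "s \<ge> -tau" "dev s \<le> rho0"
  shows "gt s = GG (Cvh * Iv s * Sh s / (Sv s + Iv s) / Fs)"
proof -
  have m: "max s (-tau) = s" using assms by simp
  have "max (Sv s + Iv s) (N/2) = Sv s + Iv s" using reg_pos[OF assms(2)] by simp
  hence "Ft s = Cvh * Iv s * Sh s / (Sv s + Iv s)" by (simp add: Ft_def m)
  then show ?thesis using Fx_bounds[OF assms(2)] by (simp add: gt_def clp_def)
qed

lemma gt_nonneg: "gt s \<ge> 0"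
  unfolding gt_def clp_def by (rule GG_nonneg) simp

lemma gt_cont: "continuous_on UNIV gt"
proof -
  have m: "continuous_on UNIV (\<lambda>s. max s (-tau))" by (intro continuous_intros)
  have img: "(\<lambda>s. max s (-tau)) ` UNIV \<subseteq> {-tau..}" by auto
  have cc: "continuous_on UNIV (\<lambda>s. f (max s (-tau)))" if "continuous_on {-tau..} f" for f
    using continuous_on_compose[OF m continuous_on_subset[OF that img]] by (simp add: o_def)
  have ft: "continuous_on UNIV Ft" unfolding Ft_def using cc[OF cont(1)] cc[OF cont(3)] cc[OF cont(4)] N_pos
    by (intro continuous_intros) auto
  show ?thesis unfolding gt_def GG_def clp_def using ft Fs_pos
    by (intro continuous_intros) auto
qed

lemma Phi_deriv: "t > -tau - 1 \<Longrightarrow> (Phi has_real_derivative gt t) (at t)"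
proof -
  assume t: "t > -tau - 1"
  have "(Phi has_real_derivative gt t) (at t within {-tau-1..t+1})"
    unfolding Phi_def using t by (intro integral_has_real_derivative continuous_on_subset[OF gt_cont]) auto
  hence "(Phi has_real_derivative gt t) (at t within {-tau-1<..<t+1})"
    by (rule DERIV_subset) auto
  then show ?thesis using at_within_open[of t "{-tau-1<..<t+1}"] t by auto
qed

lemma Phi_shift_deriv: "t > -1 \<Longrightarrow> ((\<lambda>x. Phi (x - tau)) has_real_derivative gt (t - tau)) (at t)"
  using Phi_deriv[of "t - tau"] DERIV_shift[of Phi "gt (t - tau)" t "-tau"] by simp

lemma Phi_mono: assumes "-tau - 1 < x" "x \<le> y" shows "Phi x \<le> Phi y"
proof (rule DERIV_nonneg_imp_increasing_open[OF assms(2)])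
  fix z assume "x < z" "z < y"
  then show "\<exists>d. (Phi has_real_derivative d) (at z) \<and> d \<ge> 0"
    using Phi_deriv[of z] gt_nonneg assms by auto
next
  show "continuous_on {x..y} Phi" using assms Phi_deriv by (intro cont_from_deriv[of _ Phi gt]) auto
qed

lemma Phi_diff_nonneg: "t \<ge> 0 \<Longrightarrow> Phi t - Phi (t - tau) \<ge> 0"
  using Phi_mono[of "t - tau" t] tau_nn by simp

lemma Phi_diff_le:
  assumes "\<And>s. -tau < s \<Longrightarrow> s < 0 \<Longrightarrow> gt s \<le> G"
  shows "Phi 0 - Phi (0 - tau) \<le> tau * G"
proof -
  have "(\<lambda>x. G * x - Phi x) (-tau) \<le> (\<lambda>x. G * x - Phi x) 0"
  proof (rule DERIV_nonneg_imp_increasing_open[of "-tau" 0 "\<lambda>x. G * x - Phi x"])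
    fix z assume z: "-tau < z" "z < 0"
    then show "\<exists>d. ((\<lambda>x. G * x - Phi x) has_real_derivative d) (at z) \<and> d \<ge> 0"
      using Phi_deriv[of z] assms[OF z]
      by (intro exI[of _ "G - gt z"]) (auto intro!: derivative_eq_intros)
  next
    show "continuous_on {-tau..0} (\<lambda>x. G * x - Phi x)"
      using Phi_deriv by (intro continuous_intros cont_from_deriv[of _ Phi gt]) auto
  qed (use tau_nn in auto)
  then show ?thesis by (simp add: algebra_simps)
qed

end

lemma GG_lower_scaled:
  assumes "x > 0" "X > 0" "X / x \<le> 2"
  shows "x * GG (X / x) \<ge> (X - x)^2 / (4 * x)"
proof -
  have "x * GG (X / x) \<ge> x * ((X/x - 1)^2 / 4)"
    using GG_lower[of "X/x"] assms by (intro mult_left_mono) auto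
  also have "x * ((X/x - 1)^2 / 4) = (X - x)^2 / (4 * x)"
    using assms(1) by (simp add: field_simps power2_eq_square)
  finally show ?thesis .
qed

lemma GG_upper_scaled:
  assumes "x > 0" "X \<ge> x/2" "\<bar>X - x\<bar> \<le> d"
  shows "x * GG (X / x) \<le> 2 * d^2 / x"
proof -
  have y: "X / x \<ge> 1/2" using assms by (simp add: field_simps)
  have ypos: "X/x > 0" using y by linarith
  have Xpos: "X > 0" using assms by linarith
  have "GG (X/x) \<le> (X/x - 1)^2 / (X/x)" using GG_upper[OF ypos] .
  also have "\<dots> \<le> (X/x - 1)^2 / (1/2)" using y Xpos assms(1) by (intro divide_left_mono) auto
  finally have "x * GG (X/x) \<le> x * (2 * (X/x - 1)^2)" using assms(1) by (intro mult_left_mono) auto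
  also have "x * (2 * (X/x - 1)^2) = 2 * (X - x)^2 / x" using assms(1) by (simp add: field_simps power2_eq_square)
  also have "(X - x)^2 \<le> d^2" using assms(3) by (metis abs_ge_zero power2_abs power_mono)
  hence "2 * (X - x)^2 / x \<le> 2 * d^2 / x" using assms(1) by (intro divide_right_mono) auto
  finally show ?thesis .
qed

lemma GG_upper_near:
  assumes "y \<ge> 1/2" "\<bar>y - 1\<bar> \<le> e"
  shows "GG y \<le> 2 * e^2"
proof -
  have "GG y \<le> (y - 1)^2 / y" using GG_upper[of y] assms by simp
  also have "\<dots> \<le> (y - 1)^2 / (1/2)" using assms by (intro divide_left_mono) auto
  also have "\<dots> = 2 * (y-1)^2" by simp
  also have "(y-1)^2 \<le> e^2" using assms(2) by (metis abs_ge_zero power2_abs power_mono)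
  finally show ?thesis by simp
qed

context eqm
begin
definition "m0 = min (min (1/(4 * sh)) (1/(4 * ih))) (min (a/(4 * sv)) (a/(4 * iv)))"
definition "KK = 2/iv + 2/sh + 4/N"
definition "MM = 2/sh + 2/ih + a * (2/sv + 2/iv) + Fs * tau * (2 * KK^2) + 4 * c"

lemma m0_pos: "m0 > 0" using sh_pos ih_pos sv_pos iv_pos a_pos by (simp add: m0_def)
lemma MM_pos: "MM > 0"
proof -
  have "Fs * tau * (2 * KK^2) \<ge> 0" using Fs_pos tau_nn by simp
  moreover have "2/sh > 0" "2/ih > 0" "4 * c > 0"
    using sh_pos ih_pos c_pos by auto
  moreover have "a * (2/sv + 2/iv) > 0"
    using sv_pos iv_pos a_pos by (intro mult_pos_pos add_pos_pos divide_pos_pos) auto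
  ultimately show ?thesis unfolding MM_def by linarith
qed

end

context sol
begin

lemma W_deriv:
  assumes t: "t > 0" and r: "dev t \<le> rho0"
  shows "(W has_real_derivative Wd t) (at t)"
proof -
  note p = reg_pos[OF r]
  note d = derivs[OF t]
  note d1 = GG_comp_deriv[OF sh_pos p(1) d(1)]
  note d2 = GG_comp_deriv[OF ih_pos p(2) d(2)]
  note d3 = GG_comp_deriv[OF sv_pos p(3) d(3)]
  note d4 = GG_comp_deriv[OF iv_pos p(4) d(4)]
  have d5: "((\<lambda>x. Phi x - Phi (x - tau)) has_real_derivative gt t - gt (t - tau)) (at t)"
    using Phi_deriv[of t] Phi_shift_deriv[of t] t tau_nn by (intro DERIV_diff) auto
  have d6: "((\<lambda>x. (Sv x + Iv x - N)^2) has_real_derivative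
      2 * (Sv t + Iv t - N) * ((bv - Chv * Ih t * Sv t - mv * Sv t) + (Chv * Ih t * Sv t - mv * Iv t))) (at t)"
    using d(3,4) by (auto intro!: derivative_eq_intros)
  have "(W has_real_derivative
      (1 - sh / Sh t) * (bh - Cvh * (Iv t / (Sv t + Iv t)) * Sh t - mh * Sh t)
      + (1 - ih / Ih t) * (Qd t - mh * Ih t)
      + a * ((1 - sv / Sv t) * (bv - Chv * Ih t * Sv t - mv * Sv t) + (1 - iv / Iv t) * (Chv * Ih t * Sv t - mv * Iv t))
      + Fs * (gt t - gt (t - tau))
      + c * (2 * (Sv t + Iv t - N) * ((bv - Chv * Ih t * Sv t - mv * Sv t) + (Chv * Ih t * Sv t - mv * Iv t)))) (at t)"
    unfolding W_def[abs_def]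
    by (intro DERIV_add DERIV_cmult d1 d2 d3 d4 d5 d6)
  then show ?thesis
    by (rule DERIV_cong) (simp add: Wd_def algebra_simps)
qed

lemma Wd_le:
  assumes t: "t > 0" and r: "dev t \<le> rho0" and r': "dev (t - tau) \<le> rho0"
  shows "Wd t \<le> - k * ((Sh t - sh)^2 + (Sv t - sv)^2)"
proof -
  note p = reg_pos[OF r] and p' = reg_pos[OF r']
  have g1: "gt t = GG (Cvh * Iv t * Sh t / (Sv t + Iv t) / Fs)"
    using gt_eq[OF _ r] t tau_nn by simp
  have g2: "gt (t - tau) = GG (Qd t / Fs)"
    using gt_eq[OF _ r'] t by (simp add: Qd_def)
  have Q: "Qd t > 0" using p' Cvh_pos by (simp add: Qd_def)
  show ?thesis
    unfolding Wd_def g1 g2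
    using key_ineq[of "Sh t" "Ih t" "Sv t" "Iv t" "Qd t"] p Q by simp
qed

lemma W_lower:
  assumes t: "t \<ge> 0" and r: "dev t \<le> rho0"
  shows "W t \<ge> m0 * (dev t)^2"
proof -
  note p = reg_pos[OF r]
  have l1: "sh * GG (Sh t / sh) \<ge> (Sh t - sh)^2 / (4 * sh)" using GG_lower_scaled sh_pos p by auto
  have l2: "ih * GG (Ih t / ih) \<ge> (Ih t - ih)^2 / (4 * ih)" using GG_lower_scaled ih_pos p by auto
  have l3: "sv * GG (Sv t / sv) \<ge> (Sv t - sv)^2 / (4 * sv)" using GG_lower_scaled sv_pos p by auto
  have l4: "iv * GG (Iv t / iv) \<ge> (Iv t - iv)^2 / (4 * iv)" using GG_lower_scaled iv_pos p by auto
  have n1: "sh * GG (Sh t / sh) \<ge> 0" using GG_nonneg[of "Sh t / sh"] p sh_pos by simp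
  have n2: "ih * GG (Ih t / ih) \<ge> 0" using GG_nonneg[of "Ih t / ih"] p ih_pos by simp
  have n3: "sv * GG (Sv t / sv) \<ge> 0" using GG_nonneg[of "Sv t / sv"] p sv_pos by simp
  have n4: "iv * GG (Iv t / iv) \<ge> 0" using GG_nonneg[of "Iv t / iv"] p iv_pos by simp
  have n5: "Fs * (Phi t - Phi (t - tau)) \<ge> 0" using Phi_diff_nonneg[OF t] Fs_pos by simp
  have n6: "c * (Sv t + Iv t - N)^2 \<ge> 0" using c_pos by simp
  have a3: "a * (sv * GG (Sv t / sv)) \<ge> a * ((Sv t - sv)^2 / (4 * sv))" using l3 a_pos by (intro mult_left_mono) auto
  have a4: "a * (iv * GG (Iv t / iv)) \<ge> a * ((Iv t - iv)^2 / (4 * iv))" using l4 a_pos by (intro mult_left_mono) auto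
  have a3n: "a * (sv * GG (Sv t / sv)) \<ge> 0" using n3 a_pos by simp
  have a4n: "a * (iv * GG (Iv t / iv)) \<ge> 0" using n4 a_pos by simp
  have Wsplit: "W t = sh * GG (Sh t / sh) + ih * GG (Ih t / ih) + a * (sv * GG (Sv t / sv)) + a * (iv * GG (Iv t / iv))
      + Fs * (Phi t - Phi (t - tau)) + c * (Sv t + Iv t - N)^2" by (simp add: W_def distrib_left)
  have q1: "m0 * (Sh t - sh)^2 \<le> (Sh t - sh)^2 / (4 * sh)"
  proof -
    have "m0 \<le> 1 / (4 * sh)" by (simp add: m0_def)
    hence "m0 * (Sh t - sh)^2 \<le> 1 / (4 * sh) * (Sh t - sh)^2" by (intro mult_right_mono) auto
    then show ?thesis by simp
  qed
  have q2: "m0 * (Ih t - ih)^2 \<le> (Ih t - ih)^2 / (4 * ih)"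
  proof -
    have "m0 \<le> 1 / (4 * ih)" by (simp add: m0_def)
    hence "m0 * (Ih t - ih)^2 \<le> 1 / (4 * ih) * (Ih t - ih)^2" by (intro mult_right_mono) auto
    then show ?thesis by simp
  qed
  have q3: "m0 * (Sv t - sv)^2 \<le> a * ((Sv t - sv)^2 / (4 * sv))"
  proof -
    have "m0 \<le> a / (4 * sv)" by (simp add: m0_def)
    hence "m0 * (Sv t - sv)^2 \<le> a / (4 * sv) * (Sv t - sv)^2" by (intro mult_right_mono) auto
    then show ?thesis by simp
  qed
  have q4: "m0 * (Iv t - iv)^2 \<le> a * ((Iv t - iv)^2 / (4 * iv))"
  proof -
    have "m0 \<le> a / (4 * iv)" by (simp add: m0_def)
    hence "m0 * (Iv t - iv)^2 \<le> a / (4 * iv) * (Iv t - iv)^2" by (intro mult_right_mono) auto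
    then show ?thesis by simp
  qed
  have "dev t = \<bar>Sh t - sh\<bar> \<or> dev t = \<bar>Ih t - ih\<bar> \<or> dev t = \<bar>Sv t - sv\<bar> \<or> dev t = \<bar>Iv t - iv\<bar>"
    by (auto simp: dev_def max_def)
  moreover have B1: "m0 * (Sh t - sh)^2 \<le> W t"
    unfolding Wsplit using l1 l2 a3 a4 n1 n2 a3n a4n n5 n6 q1 q2 q3 q4 by linarith
  moreover have B2: "m0 * (Ih t - ih)^2 \<le> W t"
    unfolding Wsplit using l1 l2 a3 a4 n1 n2 a3n a4n n5 n6 q1 q2 q3 q4 by linarith
  moreover have B3: "m0 * (Sv t - sv)^2 \<le> W t"
    unfolding Wsplit using l1 l2 a3 a4 n1 n2 a3n a4n n5 n6 q1 q2 q3 q4 by linarith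
  moreover have B4: "m0 * (Iv t - iv)^2 \<le> W t"
    unfolding Wsplit using l1 l2 a3 a4 n1 n2 a3n a4n n5 n6 q1 q2 q3 q4 by linarith
  ultimately show ?thesis by (elim disjE) simp_all
qed

end

context eqm
begin
definition "sfac = min (1/2) (m0 / (2 * MM))"
lemma sfac_pos: "sfac > 0" using m0_pos MM_pos by (simp add: sfac_def)
lemma sfac_le: "sfac \<le> 1/2" by (simp add: sfac_def)
end

context sol
begin

lemma ybound:
  assumes d: "dev s < \<delta>" "\<delta> \<le> rho0"
  shows "\<bar>Cvh * Iv s * Sh s / (Sv s + Iv s) / Fs - 1\<bar> \<le> KK * \<delta>"
proof -
  have r: "dev s \<le> rho0" using d by simp
  define A where "A = Iv s / iv"
  define B where "B = Sh s / sh"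
  define C where "C = N / (Sv s + Iv s)"
  note rr = reg[OF r]
  have Np: "Sv s + Iv s > 0" using reg_pos[OF r] by simp
  have dd: "\<bar>Sh s - sh\<bar> \<le> \<delta>" "\<bar>Iv s - iv\<bar> \<le> \<delta>" "\<bar>Sv s - sv\<bar> \<le> \<delta>"
    using d by (auto simp: dev_def)
  have A1: "\<bar>A - 1\<bar> \<le> \<delta> / iv"
  proof -
    have "A - 1 = (Iv s - iv) / iv" using iv_pos by (simp add: A_def field_simps)
    hence "\<bar>A - 1\<bar> = \<bar>Iv s - iv\<bar> / iv" using iv_pos by (simp add: abs_div)
    then show ?thesis using dd(2) iv_pos by (simp add: divide_right_mono)
  qed
  have B1: "\<bar>B - 1\<bar> \<le> \<delta> / sh"
  proof -
    have "B - 1 = (Sh s - sh) / sh" using sh_pos by (simp add: B_def field_simps)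
    hence "\<bar>B - 1\<bar> = \<bar>Sh s - sh\<bar> / sh" using sh_pos by (simp add: abs_div)
    then show ?thesis using dd(1) sh_pos by (simp add: divide_right_mono)
  qed
  have C1: "\<bar>C - 1\<bar> \<le> 4 * \<delta> / N"
  proof -
    have "C - 1 = (N - (Sv s + Iv s)) / (Sv s + Iv s)" using Np by (simp add: C_def field_simps)
    hence "\<bar>C - 1\<bar> = \<bar>N - (Sv s + Iv s)\<bar> / (Sv s + Iv s)" using Np by (simp add: abs_div)
    also have "\<bar>N - (Sv s + Iv s)\<bar> \<le> 2 * \<delta>" using dd(2,3) unfolding N_def by arith
    hence "\<bar>N - (Sv s + Iv s)\<bar> / (Sv s + Iv s) \<le> 2 * \<delta> / (Sv s + Iv s)" using Np by (intro divide_right_mono) auto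
    also have "2 * \<delta> / (Sv s + Iv s) \<le> 2 * \<delta> / (N/2)"
      using Np rr(9) N_pos d dd by (intro divide_left_mono) auto
    finally show ?thesis by simp
  qed
  have Bb: "B \<ge> 0" "B \<le> 21/20" using rr(1,2) sh_pos by (auto simp: B_def field_simps)
  have Cb: "C \<ge> 0" "C \<le> 20/19" using rr(9) N_pos Np by (auto simp: C_def field_simps)
  have BC: "B * C \<le> 2"
  proof -
    have "B * C \<le> (21/20) * (20/19)" using Bb Cb by (intro mult_mono) auto
    then show ?thesis by simp
  qed
  have eqd: "A * B * C - 1 = (A - 1) * (B * C) + (B - 1) * C + (C - 1)" by (simp add: algebra_simps)
  have tr1: "\<bar>(A - 1) * (B * C) + (B - 1) * C + (C - 1)\<bar> \<le> \<bar>(A - 1) * (B * C) + (B - 1) * C\<bar> + \<bar>C - 1\<bar>"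
    by (rule abs_triangle_ineq)
  have tr2: "\<bar>(A - 1) * (B * C) + (B - 1) * C\<bar> \<le> \<bar>(A - 1) * (B * C)\<bar> + \<bar>(B - 1) * C\<bar>"
    by (rule abs_triangle_ineq)
  have e1: "\<bar>(A - 1) * (B * C)\<bar> = \<bar>A - 1\<bar> * (B * C)" using Bb Cb by (simp add: abs_mult)
  have e2: "\<bar>(B - 1) * C\<bar> = \<bar>B - 1\<bar> * C" using Cb by (simp add: abs_mult)
  have "\<bar>A * B * C - 1\<bar> \<le> \<bar>A - 1\<bar> * (B * C) + \<bar>B - 1\<bar> * C + \<bar>C - 1\<bar>"
    unfolding eqd using tr1 tr2 e1 e2 by linarith
  also have "\<dots> \<le> (\<delta> / iv) * 2 + (\<delta> / sh) * 2 + 4 * \<delta> / N"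
  proof -
    have "\<bar>A - 1\<bar> * (B * C) \<le> (\<delta> / iv) * 2" using A1 BC Bb Cb by (intro mult_mono) auto
    moreover have "\<bar>B - 1\<bar> * C \<le> (\<delta> / sh) * 2" using B1 Cb by (intro mult_mono) auto
    ultimately show ?thesis using C1 by linarith
  qed
  also have "\<dots> = KK * \<delta>" by (simp add: KK_def algebra_simps)
  finally show ?thesis unfolding Fx_ratio[OF r] A_def B_def C_def .
qed

lemma W_upper:
  assumes d: "0 < \<delta>" "\<delta> \<le> rho0" and init: "\<forall>\<theta>\<in>{-tau..0}. dev \<theta> < \<delta>"
  shows "W 0 \<le> MM * \<delta>^2"
proof -
  have d0: "dev 0 < \<delta>" using init tau_nn by auto
  have r0: "dev 0 \<le> rho0" using d0 d by simp
  note p = reg_pos[OF r0]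
  have dd: "\<bar>Sh 0 - sh\<bar> \<le> \<delta>" "\<bar>Ih 0 - ih\<bar> \<le> \<delta>" "\<bar>Sv 0 - sv\<bar> \<le> \<delta>" "\<bar>Iv 0 - iv\<bar> \<le> \<delta>"
    using d0 by (auto simp: dev_def)
  have u1: "sh * GG (Sh 0 / sh) \<le> 2 * \<delta>^2 / sh" using GG_upper_scaled[OF sh_pos p(12) dd(1)] .
  have u2: "ih * GG (Ih 0 / ih) \<le> 2 * \<delta>^2 / ih" using GG_upper_scaled[OF ih_pos p(13) dd(2)] .
  have u3: "sv * GG (Sv 0 / sv) \<le> 2 * \<delta>^2 / sv" using GG_upper_scaled[OF sv_pos p(14) dd(3)] .
  have u4: "iv * GG (Iv 0 / iv) \<le> 2 * \<delta>^2 / iv" using GG_upper_scaled[OF iv_pos p(15) dd(4)] .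
  have ua: "a * (sv * GG (Sv 0 / sv) + iv * GG (Iv 0 / iv)) \<le> a * (2 * \<delta>^2 / sv + 2 * \<delta>^2 / iv)"
    using u3 u4 a_pos by (intro mult_left_mono) auto
  have gb: "gt s \<le> 2 * (KK * \<delta>)^2" if s: "-tau < s" "s < 0" for s
  proof -
    have ds: "dev s < \<delta>" using init s by auto
    hence rs: "dev s \<le> rho0" using d by simp
    have "gt s = GG (Cvh * Iv s * Sh s / (Sv s + Iv s) / Fs)" using gt_eq[OF _ rs] s by simp
    also have "\<dots> \<le> 2 * (KK * \<delta>)^2"
      using GG_upper_near[OF Fx_bounds(1)[OF rs] ybound[OF ds d(2)]] .
    finally show ?thesis .
  qed
  have uP: "Fs * (Phi 0 - Phi (0 - tau)) \<le> Fs * (tau * (2 * (KK * \<delta>)^2))"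
    using Phi_diff_le[OF gb] Fs_pos by (intro mult_left_mono) auto
  have uc: "c * (Sv 0 + Iv 0 - N)^2 \<le> c * (2 * \<delta>)^2"
  proof -
    have "\<bar>Sv 0 + Iv 0 - N\<bar> \<le> 2 * \<delta>" using dd(3,4) unfolding N_def by arith
    hence "(Sv 0 + Iv 0 - N)^2 \<le> (2 * \<delta>)^2" by (metis abs_ge_zero power2_abs power_mono)
    then show ?thesis using c_pos by (intro mult_left_mono) auto
  qed
  have "W 0 \<le> 2 * \<delta>^2 / sh + 2 * \<delta>^2 / ih + a * (2 * \<delta>^2 / sv + 2 * \<delta>^2 / iv)
      + Fs * (tau * (2 * (KK * \<delta>)^2)) + c * (2 * \<delta>)^2"
    unfolding W_def using u1 u2 ua uP uc by linarith
  also have "\<dots> = MM * \<delta>^2" by (simp add: MM_def algebra_simps power2_eq_square)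
  finally show ?thesis .
qed

lemma W_cont:
  assumes "\<forall>s\<in>{0..T}. dev s \<le> rho0"
  shows "continuous_on {0..T} W"
proof -
  have sub: "{0..T} \<subseteq> {-tau..}" using tau_nn by auto
  have c1: "continuous_on {0..T} Sh" "continuous_on {0..T} Ih" "continuous_on {0..T} Sv" "continuous_on {0..T} Iv"
    using cont continuous_on_subset[OF _ sub] by auto
  have cP: "continuous_on {0..T} Phi"
    using Phi_deriv tau_nn by (intro cont_from_deriv[of _ Phi gt]) auto
  have cP2: "continuous_on {0..T} (\<lambda>x. Phi (x - tau))"
    using Phi_shift_deriv by (intro cont_from_deriv[of _ _ "\<lambda>t. gt (t - tau)"]) auto
  have pos: "\<forall>s\<in>{0..T}. Sh s / sh \<noteq> 0 \<and> Ih s / ih \<noteq> 0 \<and> Sv s / sv \<noteq> 0 \<and> Iv s / iv \<noteq> 0"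
    using assms reg_pos sh_pos ih_pos sv_pos iv_pos by (metis divide_eq_0_iff less_irrefl)
  show ?thesis unfolding W_def[abs_def] GG_def using c1 cP cP2 pos
    by (intro continuous_intros) auto
qed

lemma stays:
  assumes rho: "0 < \<rho>" "\<rho> \<le> rho0" and init: "\<forall>\<theta>\<in>{-tau..0}. dev \<theta> < \<rho> * sfac"
  shows "\<forall>t\<ge>0. dev t < \<rho>"
proof (rule ccontr)
  define \<delta> where "\<delta> = \<rho> * sfac"
  have \<delta>: "0 < \<delta>" "\<delta> \<le> \<rho> / 2" using rho sfac_pos sfac_le by (auto simp: \<delta>_def)
  have \<delta>r: "\<delta> \<le> rho0" using \<delta> rho by simp
  have init': "\<forall>\<theta>\<in>{-tau..0}. dev \<theta> < \<delta>" using init by (simp add: \<delta>_def)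
  have W0: "W 0 < m0 * \<rho>^2"
  proof -
    have "W 0 \<le> MM * \<delta>^2" using W_upper[OF \<delta>(1) \<delta>r init'] .
    also have "MM * \<delta>^2 = MM * sfac * sfac * \<rho>^2" by (simp add: \<delta>_def power2_eq_square)
    also have "\<dots> \<le> MM * (m0 / (2 * MM)) * (1/2) * \<rho>^2"
      using MM_pos sfac_pos sfac_le m0_pos
      by (intro mult_right_mono mult_mono mult_left_mono) (auto simp: sfac_def)
    also have "\<dots> = m0 * \<rho>^2 / 4" using MM_pos by (simp add: field_simps)
    also have "\<dots> < m0 * \<rho>^2" using m0_pos rho by simp
    finally show ?thesis .
  qed
  assume "\<not> (\<forall>t\<ge>0. dev t < \<rho>)"
  then obtain t where t: "t \<ge> 0" "dev t \<ge> \<rho>" by auto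
  have d0: "dev 0 < \<delta>" using init' tau_nn by auto
  have dc: "continuous_on {0..x} dev" for x
    by (rule continuous_on_subset[OF dev_cont]) (use tau_nn in auto)
  have ivt: "\<exists>x. 0 \<le> x \<and> x \<le> s \<and> dev x = \<rho>" if "s \<ge> 0" "dev s \<ge> \<rho>" for s
    using IVT'[of dev 0 \<rho> s] d0 \<delta> that dc by auto
  define A where "A = {0..t} \<inter> dev -` {\<rho>}"
  have Ane: "A \<noteq> {}" using ivt[OF t] by (auto simp: A_def)
  have Acl: "closed A" unfolding A_def by (rule continuous_closed_preimage[OF dc]) auto
  have Abdd: "bdd_below A" by (auto simp: A_def intro!: bdd_belowI[of _ 0])
  define t1 where "t1 = Inf A"
  have t1A: "t1 \<in> A" unfolding t1_def by (rule closed_contains_Inf[OF Ane Abdd Acl])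
  hence t1: "0 \<le> t1" "t1 \<le> t" "dev t1 = \<rho>" by (auto simp: A_def)
  have t1pos: "t1 > 0" using t1 d0 \<delta> by (cases "t1 = 0") auto
  have below: "dev s \<le> \<rho>" if s: "0 \<le> s" "s \<le> t1" for s
  proof (rule ccontr)
    assume "\<not> dev s \<le> \<rho>"
    then obtain x where x: "0 \<le> x" "x \<le> s" "dev x = \<rho>" using ivt[of s] s by auto
    hence "x \<in> A" using s t1 by (auto simp: A_def)
    hence "t1 \<le> x" unfolding t1_def using Abdd by (rule cInf_lower)
    hence "x = s" "s = t1" using x s by auto
    then show False using \<open>\<not> dev s \<le> \<rho>\<close> t1 by simp
  qed
  have regs: "dev s \<le> rho0" if "0 \<le> s" "s \<le> t1" for s using below[OF that] rho by simp
  have regd: "dev (s - tau) \<le> rho0" if "0 \<le> s" "s \<le> t1" for s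
  proof (cases "s - tau < 0")
    case True
    then have "dev (s - tau) < \<delta>" using init' that by auto
    then show ?thesis using \<delta>r by simp
  next
    case False
    then show ?thesis using regs[of "s - tau"] that tau_nn by auto
  qed
  have "W t1 \<le> W 0"
  proof (rule DERIV_nonpos_imp_decreasing_open[of 0 t1 W])
    fix x assume x: "0 < x" "x < t1"
    have "Wd x \<le> - k * ((Sh x - sh)^2 + (Sv x - sv)^2)"
      using Wd_le[OF x(1) regs regd] x by auto
    also have "\<dots> \<le> 0" using k_pos by simp
    finally show "\<exists>y. (W has_real_derivative y) (at x) \<and> y \<le> 0"
      using W_deriv[OF x(1) regs] x by auto
  next
    show "continuous_on {0..t1} W" using regs by (intro W_cont) auto
  qed (use t1pos in auto)
  moreover have "W t1 \<ge> m0 * (dev t1)^2" using W_lower[OF t1(1) regs[OF t1(1) order.refl]] .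
  ultimately show False using W0 t1(3) by simp
qed

end

context sol
begin

lemma init_close_dev:
  assumes "init_close tau (sh, ih, sv, iv) d Sh Ih Sv Iv"
  shows "\<forall>\<theta>\<in>{-tau..0}. dev \<theta> < d"
proof
  fix \<theta> :: real assume th: "\<theta> \<in> {-tau..0}"
  have cd: "continuous_on {-tau..0} dev" by (rule continuous_on_subset[OF dev_cont]) auto
  have "compact (dev ` {-tau..0})" by (rule compact_continuous_image[OF cd compact_Icc])
  hence bdd: "bdd_above (dev ` {-tau..0})" by (intro bounded_imp_bdd_above compact_imp_bounded)
  have "dev \<theta> \<le> (SUP x\<in>{-tau..0}. dev x)" by (rule cSUP_upper[OF th bdd])
  also have "\<dots> < d" using assms unfolding init_close_def dev_def[abs_def] by simp
  finally show "dev \<theta> < d" .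
qed

lemma attract:
  assumes init: "\<forall>\<theta>\<in>{-tau..0}. dev \<theta> < rho0 * sfac"
  shows "(Sh \<longlongrightarrow> sh) at_top \<and> (Ih \<longlongrightarrow> ih) at_top \<and> (Sv \<longlongrightarrow> sv) at_top \<and> (Iv \<longlongrightarrow> iv) at_top"
proof -
  have st: "\<forall>t\<ge>0. dev t < rho0" using stays[OF rho0_pos order.refl init] .
  have r: "dev t \<le> rho0" if "t > 0" for t
  proof -
    have "dev t < rho0" using st that by simp
    then show ?thesis by simp
  qed
  have rs: "rho0 * sfac \<le> rho0" using rho0_pos sfac_le by simp
  have rd: "dev (t - tau) \<le> rho0" if t: "t > 0" for t
  proof (cases "t - tau < 0")
    case True
    then have "dev (t - tau) < rho0 * sfac" using init t by auto
    then show ?thesis using rs by simp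
  next
    case False
    then have "dev (t - tau) < rho0" using st by simp
    then show ?thesis by simp
  qed
  have Wnn: "W t \<ge> 0" if "t > 0" for t
  proof -
    have "W t \<ge> m0 * (dev t)^2" using W_lower[of t] r[OF that] that by simp
    moreover have "m0 * (dev t)^2 \<ge> 0" using m0_pos by simp
    ultimately show ?thesis by linarith
  qed
  have Wle1: "Wd t \<le> - k * (Sh t - sh)^2" if "t > 0" for t
  proof -
    have "Wd t \<le> - k * ((Sh t - sh)^2 + (Sv t - sv)^2)" using Wd_le[OF that r[OF that] rd[OF that]] .
    moreover have "k * (Sv t - sv)^2 \<ge> 0" using k_pos by simp
    ultimately show ?thesis by (simp add: distrib_left)
  qed
  have Wle2: "Wd t \<le> - k * (Sv t - sv)^2" if "t > 0" for t
  proof -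
    have "Wd t \<le> - k * ((Sh t - sh)^2 + (Sv t - sv)^2)" using Wd_le[OF that r[OF that] rd[OF that]] .
    moreover have "k * (Sh t - sh)^2 \<ge> 0" using k_pos by simp
    ultimately show ?thesis by (simp add: distrib_left)
  qed
  define B1 where "B1 = bh + Cvh * (2 * sh) + mh * (2 * sh)"
  define B2 where "B2 = bv + Chv * (2 * ih) * (2 * sv) + mv * (2 * sv)"
  have B1: "B1 > 0" using bh_pos Cvh_pos sh_pos mh_pos by (simp add: B1_def add_pos_pos)
  have B2: "B2 > 0" using bv_pos Chv_pos ih_pos sv_pos mv_pos by (simp add: B2_def add_pos_pos)
  have gB1: "\<bar>bh - Cvh * (Iv t / (Sv t + Iv t)) * Sh t - mh * Sh t\<bar> \<le> B1" if t: "t > 0" for t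
  proof -
    note p = reg_pos[OF r[OF t]]
    have u: "0 \<le> Iv t / (Sv t + Iv t)" "Iv t / (Sv t + Iv t) \<le> 1" using p by auto
    have x1: "0 \<le> Cvh * (Iv t / (Sv t + Iv t)) * Sh t" using u p Cvh_pos by simp
    have x2: "Cvh * (Iv t / (Sv t + Iv t)) * Sh t \<le> Cvh * 1 * (2 * sh)"
      using u p Cvh_pos by (intro mult_mono mult_left_mono) auto
    have x3: "0 \<le> mh * Sh t" "mh * Sh t \<le> mh * (2 * sh)" using p mh_pos by auto
    show ?thesis using x1 x2 x3 bh_pos unfolding B1_def by (simp add: abs_le_iff)
  qed
  have gB2: "\<bar>bv - Chv * Ih t * Sv t - mv * Sv t\<bar> \<le> B2" if t: "t > 0" for t
  proof -
    note p = reg_pos[OF r[OF t]]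
    have Ih2: "Ih t \<le> 2 * ih" using reg(4)[OF r[OF t]] ih_pos by simp
    have x1: "0 \<le> Chv * Ih t * Sv t" using p Chv_pos by simp
    have x2: "Chv * Ih t * Sv t \<le> Chv * (2 * ih) * (2 * sv)"
      using p Ih2 Chv_pos by (intro mult_mono mult_left_mono) auto
    have x3: "0 \<le> mv * Sv t" "mv * Sv t \<le> mv * (2 * sv)" using p mv_pos by auto
    show ?thesis using x1 x2 x3 bv_pos unfolding B2_def by (simp add: abs_le_iff)
  qed
  have lSh0: "((\<lambda>t. Sh t - sh) \<longlongrightarrow> 0) at_top"
  proof (rule decay[OF k_pos B1, of W Wd])
    show "\<And>t. 0 < t \<Longrightarrow> (W has_real_derivative Wd t) (at t)" using W_deriv r by auto
    show "\<And>t. 0 < t \<Longrightarrow> 0 \<le> W t" by (rule Wnn)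
    show "\<And>t. 0 < t \<Longrightarrow> Wd t \<le> - k * (Sh t - sh)^2" by (rule Wle1)
    show "\<And>t. 0 < t \<Longrightarrow> ((\<lambda>t. Sh t - sh) has_real_derivative
        (bh - Cvh * (Iv t / (Sv t + Iv t)) * Sh t - mh * Sh t)) (at t)"
      using derivs(1) by (auto intro!: derivative_eq_intros)
    show "\<And>t. 0 < t \<Longrightarrow> \<bar>bh - Cvh * (Iv t / (Sv t + Iv t)) * Sh t - mh * Sh t\<bar> \<le> B1" by (rule gB1)
  qed
  have lSv0: "((\<lambda>t. Sv t - sv) \<longlongrightarrow> 0) at_top"
  proof (rule decay[OF k_pos B2, of W Wd])
    show "\<And>t. 0 < t \<Longrightarrow> (W has_real_derivative Wd t) (at t)" using W_deriv r by auto
    show "\<And>t. 0 < t \<Longrightarrow> 0 \<le> W t" by (rule Wnn)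
    show "\<And>t. 0 < t \<Longrightarrow> Wd t \<le> - k * (Sv t - sv)^2" by (rule Wle2)
    show "\<And>t. 0 < t \<Longrightarrow> ((\<lambda>t. Sv t - sv) has_real_derivative
        (bv - Chv * Ih t * Sv t - mv * Sv t)) (at t)"
      using derivs(3) by (auto intro!: derivative_eq_intros)
    show "\<And>t. 0 < t \<Longrightarrow> \<bar>bv - Chv * Ih t * Sv t - mv * Sv t\<bar> \<le> B2" by (rule gB2)
  qed
  have lSh: "(Sh \<longlongrightarrow> sh) at_top"
    using tendsto_add[OF lSh0 tendsto_const[of sh]] by simp
  have lSv: "(Sv \<longlongrightarrow> sv) at_top"
    using tendsto_add[OF lSv0 tendsto_const[of sv]] by simp
  have lN: "((\<lambda>t. Sv t + Iv t) \<longlongrightarrow> bv / mv) at_top"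
  proof (rule lin_conv[OF mv_pos, of _ "\<lambda>t. bv"])
    fix t :: real assume t: "t > 0"
    show "((\<lambda>t. Sv t + Iv t) has_real_derivative bv - mv * (Sv t + Iv t)) (at t)"
      using DERIV_add[OF derivs(3)[OF t] derivs(4)[OF t]] by (rule DERIV_cong) (simp add: algebra_simps)
  qed simp
  have lIv: "(Iv \<longlongrightarrow> iv) at_top"
  proof -
    have "((\<lambda>t. (Sv t + Iv t) - Sv t) \<longlongrightarrow> bv / mv - sv) at_top"
      by (intro tendsto_diff lN lSv)
    moreover have "bv / mv - sv = iv" using bv_eq mv_pos by (simp add: N_def)
    ultimately show ?thesis by simp
  qed
  have shift: "filterlim (\<lambda>t. t - tau) at_top at_top" by real_asymp
  have lQ: "(Qd \<longlongrightarrow> Cvh * (iv / (sv + iv)) * sh) at_top"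
  proof -
    have a1: "((\<lambda>t. Iv (t - tau)) \<longlongrightarrow> iv) at_top" using filterlim_compose[OF lIv shift] by (simp add: o_def)
    have a2: "((\<lambda>t. Sv (t - tau)) \<longlongrightarrow> sv) at_top" using filterlim_compose[OF lSv shift] by (simp add: o_def)
    have a3: "((\<lambda>t. Sh (t - tau)) \<longlongrightarrow> sh) at_top" using filterlim_compose[OF lSh shift] by (simp add: o_def)
    have "sv + iv \<noteq> 0" using sv_pos iv_pos by simp
    then show ?thesis unfolding Qd_def[abs_def] using a1 a2 a3 by (intro tendsto_intros) auto
  qed
  have lIh: "(Ih \<longlongrightarrow> Cvh * (iv / (sv + iv)) * sh / mh) at_top"
    by (rule lin_conv[OF mh_pos _ lQ]) (rule derivs(2))
  have "Cvh * (iv / (sv + iv)) * sh / mh = ih" using e2 mh_pos by (simp add: field_simps)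
  with lIh have "(Ih \<longlongrightarrow> ih) at_top" by simp
  then show ?thesis using lSh lSv lIv by simp
qed

end

theorem theorem3:
  fixes bh bv mh mv Cvh Chv tau :: real
  assumes "bh > 0" "bv > 0" "mh > 0" "mv > 0" "Cvh > 0" "Chv > 0"
    and "R0 bh bv mh mv Cvh Chv > 1"
    and "tau \<ge> 0"
  shows "(\<exists>!E. endemic_equilibrium bh bv mh mv Cvh Chv E) \<and>
         (\<forall>E. endemic_equilibrium bh bv mh mv Cvh Chv E \<longrightarrow>
              locally_asymptotically_stable bh bv mh mv Cvh Chv tau E)"
proof (intro conjI allI impI)
  show "\<exists>!E. endemic_equilibrium bh bv mh mv Cvh Chv E"
    using unique_endemic[OF assms(1-7)] .
  fix E assume EE: "endemic_equilibrium bh bv mh mv Cvh Chv E"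
  obtain sh ih sv iv where E: "E = (sh, ih, sv, iv)" using prod_cases4 by blast
  have P: "sh > 0" "ih > 0" "sv > 0" "iv > 0" using EE E by (auto simp: endemic_equilibrium_def)
  have e: "bh - Cvh * (iv / (sv + iv)) * sh - mh * sh = 0"
       "Cvh * (iv / (sv + iv)) * sh - mh * ih = 0"
       "bv - Chv * ih * sv - mv * sv = 0"
       "Chv * ih * sv - mv * iv = 0"
    using EE E by (auto simp: endemic_equilibrium_def is_equilibrium_def)
  interpret eqm bh bv mh mv Cvh Chv tau sh ih sv iv
    using assms P e by unfold_locales auto
  have solI: "sol bh bv mh mv Cvh Chv tau sh ih sv iv Sh Ih Sv Iv"
    if "is_solution bh bv mh mv Cvh Chv tau Sh Ih Sv Iv" for Sh Ih Sv Iv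
    using that by (intro sol.intro eqm_axioms sol_axioms.intro)
  have stab: "\<exists>\<delta>>0. \<forall>Sh Ih Sv Iv.
          in_Cplus tau Sh Ih Sv Iv \<and> init_close tau (sh, ih, sv, iv) \<delta> Sh Ih Sv Iv \<and>
          is_solution bh bv mh mv Cvh Chv tau Sh Ih Sv Iv \<longrightarrow>
          (\<forall>t\<ge>0. \<bar>Sh t - sh\<bar> < \<epsilon> \<and> \<bar>Ih t - ih\<bar> < \<epsilon> \<and> \<bar>Sv t - sv\<bar> < \<epsilon> \<and> \<bar>Iv t - iv\<bar> < \<epsilon>)"
    if \<epsilon>: "\<epsilon> > 0" for \<epsilon>
  proof -
    define \<rho> where "\<rho> = min \<epsilon> rho0"
    have \<rho>: "0 < \<rho>" "\<rho> \<le> rho0" "\<rho> \<le> \<epsilon>" using \<epsilon> rho0_pos by (auto simp: \<rho>_def)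
    have "\<rho> * sfac > 0" using \<rho> sfac_pos by simp
    moreover have "\<forall>Sh Ih Sv Iv.
          in_Cplus tau Sh Ih Sv Iv \<and> init_close tau (sh, ih, sv, iv) (\<rho> * sfac) Sh Ih Sv Iv \<and>
          is_solution bh bv mh mv Cvh Chv tau Sh Ih Sv Iv \<longrightarrow>
          (\<forall>t\<ge>0. \<bar>Sh t - sh\<bar> < \<epsilon> \<and> \<bar>Ih t - ih\<bar> < \<epsilon> \<and> \<bar>Sv t - sv\<bar> < \<epsilon> \<and> \<bar>Iv t - iv\<bar> < \<epsilon>)"
    proof (rule allI, rule allI, rule allI, rule allI, rule impI)
      fix Sh Ih Sv Iv :: "real \<Rightarrow> real"
      assume H: "in_Cplus tau Sh Ih Sv Iv \<and> init_close tau (sh, ih, sv, iv) (\<rho> * sfac) Sh Ih Sv Iv \<and>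
          is_solution bh bv mh mv Cvh Chv tau Sh Ih Sv Iv"
      interpret S: sol bh bv mh mv Cvh Chv tau sh ih sv iv Sh Ih Sv Iv using H solI by blast
      have init: "\<forall>\<theta>\<in>{-tau..0}. S.dev \<theta> < \<rho> * sfac" using S.init_close_dev H by blast
      have st: "\<forall>t\<ge>0. S.dev t < \<rho>" using S.stays[OF \<rho>(1,2) init] .
      show "\<forall>t\<ge>0. \<bar>Sh t - sh\<bar> < \<epsilon> \<and> \<bar>Ih t - ih\<bar> < \<epsilon> \<and> \<bar>Sv t - sv\<bar> < \<epsilon> \<and> \<bar>Iv t - iv\<bar> < \<epsilon>"
      proof (intro allI impI)
        fix t :: real assume "t \<ge> 0"
        then have "S.dev t < \<epsilon>" using st \<rho> by force
        then show "\<bar>Sh t - sh\<bar> < \<epsilon> \<and> \<bar>Ih t - ih\<bar> < \<epsilon> \<and> \<bar>Sv t - sv\<bar> < \<epsilon> \<and> \<bar>Iv t - iv\<bar> < \<epsilon>"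
          by (simp add: S.dev_def)
      qed
    qed
    ultimately show ?thesis by blast
  qed
  have attr: "\<exists>\<delta>>0. \<forall>Sh Ih Sv Iv.
          in_Cplus tau Sh Ih Sv Iv \<and> init_close tau (sh, ih, sv, iv) \<delta> Sh Ih Sv Iv \<and>
          is_solution bh bv mh mv Cvh Chv tau Sh Ih Sv Iv \<longrightarrow>
          (Sh \<longlongrightarrow> sh) at_top \<and> (Ih \<longlongrightarrow> ih) at_top \<and>
          (Sv \<longlongrightarrow> sv) at_top \<and> (Iv \<longlongrightarrow> iv) at_top"
  proof (rule exI[of _ "rho0 * sfac"], rule conjI)
    show "rho0 * sfac > 0" using rho0_pos sfac_pos by simp
    show "\<forall>Sh Ih Sv Iv.
          in_Cplus tau Sh Ih Sv Iv \<and> init_close tau (sh, ih, sv, iv) (rho0 * sfac) Sh Ih Sv Iv \<and>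
          is_solution bh bv mh mv Cvh Chv tau Sh Ih Sv Iv \<longrightarrow>
          (Sh \<longlongrightarrow> sh) at_top \<and> (Ih \<longlongrightarrow> ih) at_top \<and>
          (Sv \<longlongrightarrow> sv) at_top \<and> (Iv \<longlongrightarrow> iv) at_top"
    proof (rule allI, rule allI, rule allI, rule allI, rule impI)
      fix Sh Ih Sv Iv :: "real \<Rightarrow> real"
      assume H: "in_Cplus tau Sh Ih Sv Iv \<and> init_close tau (sh, ih, sv, iv) (rho0 * sfac) Sh Ih Sv Iv \<and>
            is_solution bh bv mh mv Cvh Chv tau Sh Ih Sv Iv"
      interpret S: sol bh bv mh mv Cvh Chv tau sh ih sv iv Sh Ih Sv Iv using H solI by blast
      have init: "\<forall>\<theta>\<in>{-tau..0}. S.dev \<theta> < rho0 * sfac" using S.init_close_dev H by blast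
      show "(Sh \<longlongrightarrow> sh) at_top \<and> (Ih \<longlongrightarrow> ih) at_top \<and> (Sv \<longlongrightarrow> sv) at_top \<and> (Iv \<longlongrightarrow> iv) at_top"
        using S.attract[OF init] .
    qed
  qed
  show "locally_asymptotically_stable bh bv mh mv Cvh Chv tau E"
    unfolding locally_asymptotically_stable_def E using stab attr by simp
qed


end
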